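(* Under the setup of the context, there is a constant $C>0$ such that for all $n\in\mathbb N$, $$E\Big(\sum_{k=0}^nR(k)\Big)^2\le Cn,\qquad R(k)=\prod_{j=0}^\ell X_j(q_j(k))-\prod_{j=0}^\ell a_j .$$
   Context: $(\Omega,\mathcal F,P)$ is a probability space, $\ell\ge1$, and $X_0,X_1,\dots,X_\ell$ are real stationary processes $X_j(n)$, $n\ge0$, with $|X_j(n)|\le D$ a.s. $\{\mathcal F_{kl}\}$ is a family of sub-$\sigma$-algebras with $\mathcal F_{kl}\subset\mathcal F_{k'l'}$ for $k'\le k$, $l'\ge l$; $\alpha(n)=\sup_{k\ge0}\sup_{A\in\mathcal F_{-\infty,k},B\in\mathcal F_{k+n,\infty}}|P(A\cap B)-P(A)P(B)|$, $\beta_j(n)=\sup_{m\ge0}E|X_j(m)-E(X_j(m)\mid\mathcal F_{m-n,m+n})|$, and $\alpha(n)+\max_{0\le j\le\ell}\beta_j(n)\le\kappa^{-1}e^{-\kappa n}$ for some $\kappa>0$. $q_0(n)=n$, $q_1(n)=rn+p$ with integers $r\ge2$, $p\ge0$; $q_2,\dots,q_\ell$ are nonnegative-integer-valued and for some $\gamma\in(0,1)$, $n_0>1$ and all $n\ge n_0$: $q_j(n+1)\ge q_j(n)+n^\gamma$ ($j=2,\dots,\ell$) and $q_{j+1}([n^{1-\gamma}])\ge q_j(n)n^\gamma$ ($j=1,\dots,\ell-1$). $a_j=EX_j(0)$. *)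

theory Defs
  imports "HOL-Probability.Probability"
begin

definition ext_int_idx :: "ereal set" where
  "ext_int_idx = {ereal (real_of_int i) | i. True} \<union> {\<infinity>, -\<infinity>}"

definition stationary_proc :: "'a measure \<Rightarrow> (nat \<Rightarrow> 'a \<Rightarrow> real) \<Rightarrow> bool" where
  "stationary_proc M Y \<longleftrightarrow>
     (\<forall>m::nat. distr M (PiM UNIV (\<lambda>_. borel)) (\<lambda>\<omega> n. Y (n + m) \<omega>)
             = distr M (PiM UNIV (\<lambda>_. borel)) (\<lambda>\<omega> n. Y n \<omega>))"

definition alpha_mix :: "'a measure \<Rightarrow> (ereal \<Rightarrow> ereal \<Rightarrow> 'a measure) \<Rightarrow> nat \<Rightarrow> real" where
  "alpha_mix M F n = Sup {\<bar>measure M (A \<inter> B) - measure M A * measure M B\<bar> | k A B.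
       A \<in> sets (F (-\<infinity>) (ereal (real k))) \<and> B \<in> sets (F (ereal (real (k + n))) \<infinity>)}"

definition beta_mix :: "'a measure \<Rightarrow> (ereal \<Rightarrow> ereal \<Rightarrow> 'a measure) \<Rightarrow> (nat \<Rightarrow> 'a \<Rightarrow> real) \<Rightarrow> nat \<Rightarrow> real" where
  "beta_mix M F Y n = Sup {(\<integral>\<omega>. \<bar>Y m \<omega> - real_cond_exp M (F (ereal (real m - real n)) (ereal (real m + real n))) (Y m) \<omega>\<bar> \<partial>M) | m. True}"

end

theory Submission imports Defs "HOL-Real_Asymp.Real_Asymp" begin

lemma bdd_integrable:
  assumes "finite_measure M" "f \<in> borel_measurable M" "\<And>x. x \<in> space M \<Longrightarrow> \<bar>f x\<bar> \<le> (B::real)"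
  shows "integrable M f"
  by (rule finite_measure.integrable_const_bound[OF assms(1) _ assms(2), where B=B])
     (use assms(3) in auto)

lemma cov_sign:
  fixes f g :: "'a \<Rightarrow> real"
  assumes P: "prob_space M" and sub: "subalgebra M G" and fG: "f \<in> borel_measurable G"
    and fb: "\<And>x. x \<in> space M \<Longrightarrow> \<bar>f x\<bar> \<le> a"
    and gM: "g \<in> borel_measurable M" and gb: "\<And>x. x \<in> space M \<Longrightarrow> \<bar>g x\<bar> \<le> b"
  shows "\<exists>u \<in> borel_measurable G. \<bar>(\<integral>x. f x * g x \<partial>M) - (\<integral>x. f x \<partial>M) * (\<integral>x. g x \<partial>M)\<bar>
           \<le> a * ((\<integral>x. sgn (u x) * g x \<partial>M) - (\<integral>x. sgn (u x) \<partial>M) * (\<integral>x. g x \<partial>M))"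
proof -
  interpret prob_space M by (rule P)
  have "finite_measure_subalgebra M G" by unfold_locales (rule sub)
  then interpret sigma_finite_subalgebra M G by (rule finite_measure_subalgebra_is_sigma_finite)
  have fM: "f \<in> borel_measurable M" by (rule measurable_from_subalg[OF sub fG])
  define m where "m = (\<integral>x. g x \<partial>M)"
  define g0 where "g0 = (\<lambda>x. g x - m)"
  define u where "u = real_cond_exp M G g0"
  have g0M: "g0 \<in> borel_measurable M" unfolding g0_def using gM by measurable
  have ig: "integrable M g" by (rule bdd_integrable[OF finite_measure_axioms gM gb])
  have ifn: "integrable M f" by (rule bdd_integrable[OF finite_measure_axioms fM fb])
  have ig0: "integrable M g0" unfolding g0_def using ig by auto
  have ifg: "integrable M (\<lambda>x. f x * g x)"
    by (rule bdd_integrable[OF finite_measure_axioms, where B="a*b"]) (use fM gM in measurable,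
      auto simp: abs_mult intro!: mult_mono fb gb order_trans[OF abs_ge_zero gb] order_trans[OF abs_ge_zero fb])
  have ifg0: "integrable M (\<lambda>x. f x * g0 x)" unfolding g0_def
    using ifg ifn by (simp add: right_diff_distrib)
  have e1: "(\<integral>x. f x * g x \<partial>M) - (\<integral>x. f x \<partial>M) * m = (\<integral>x. f x * g0 x \<partial>M)"
    unfolding g0_def using ifg ifn by (simp add: right_diff_distrib mult.commute)
  have e2: "(\<integral>x. f x * g0 x \<partial>M) = (\<integral>x. f x * u x \<partial>M)"
    unfolding u_def using real_cond_exp_intg(2)[OF ifg0 fG g0M] by simp
  have ifu: "integrable M (\<lambda>x. f x * u x)"
    unfolding u_def using real_cond_exp_intg(1)[OF ifg0 fG g0M] by simp
  have iu: "integrable M u" unfolding u_def using ig0 by (rule real_cond_exp_int(1))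
  have uG: "u \<in> borel_measurable G" unfolding u_def by simp
  have uM: "u \<in> borel_measurable M" by (rule measurable_from_subalg[OF sub uG])
  have sG: "(\<lambda>x. sgn (u x)) \<in> borel_measurable G" using uG by measurable
  have "\<bar>\<integral>x. f x * u x \<partial>M\<bar> \<le> (\<integral>x. \<bar>f x * u x\<bar> \<partial>M)" by (rule integral_abs_bound)
  also have "\<dots> \<le> (\<integral>x. a * \<bar>u x\<bar> \<partial>M)"
  proof (rule integral_mono)
    show "integrable M (\<lambda>x. \<bar>f x * u x\<bar>)" using ifu by (rule integrable_abs)
    show "integrable M (\<lambda>x. a * \<bar>u x\<bar>)" using iu by auto
    fix x assume "x \<in> space M" then show "\<bar>f x * u x\<bar> \<le> a * \<bar>u x\<bar>"
      by (simp add: abs_mult mult_right_mono fb)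
  qed
  also have "\<dots> = a * (\<integral>x. sgn (u x) * u x \<partial>M)"
    by (simp add: abs_sgn mult.commute)
  also have "(\<integral>x. sgn (u x) * u x \<partial>M) = (\<integral>x. sgn (u x) * g0 x \<partial>M)"
  proof -
    have "integrable M (\<lambda>x. sgn (u x) * g0 x)"
      by (rule Bochner_Integration.integrable_bound[OF ig0]) (use uM g0M in measurable, auto simp: abs_mult abs_sgn_eq)
    from real_cond_exp_intg(2)[OF this sG g0M] show ?thesis unfolding u_def by simp
  qed
  also have "(\<integral>x. sgn (u x) * g0 x \<partial>M) = (\<integral>x. sgn (u x) * g x \<partial>M) - (\<integral>x. sgn (u x) \<partial>M) * m"
  proof -
    have i1: "integrable M (\<lambda>x. sgn (u x) * g x)"
      by (rule Bochner_Integration.integrable_bound[OF ig]) (use uM gM in measurable, auto simp: abs_mult abs_sgn_eq)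
    have i2: "integrable M (\<lambda>x. sgn (u x))"
    proof (rule bdd_integrable[OF finite_measure_axioms, where B=1])
      show "(\<lambda>x. sgn (u x)) \<in> borel_measurable M" using uM by measurable
    qed (simp add: abs_sgn_eq)
    show ?thesis unfolding g0_def using i1 i2 by (simp add: right_diff_distrib mult.commute)
  qed
  finally show ?thesis using e1 e2 uG unfolding m_def by auto
qed

lemma cov_sgn_sets:
  fixes u v :: "'a \<Rightarrow> real"
  assumes P: "prob_space M" and s1: "subalgebra M G1" and s2: "subalgebra M G2"
    and uG: "u \<in> borel_measurable G1" and vG: "v \<in> borel_measurable G2"
    and al: "\<And>A B. A \<in> sets G1 \<Longrightarrow> B \<in> sets G2 \<Longrightarrow>
               \<bar>measure M (A \<inter> B) - measure M A * measure M B\<bar> \<le> \<alpha>"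
  shows "\<bar>(\<integral>x. sgn (u x) * sgn (v x) \<partial>M) - (\<integral>x. sgn (u x) \<partial>M) * (\<integral>x. sgn (v x) \<partial>M)\<bar> \<le> 4 * \<alpha>"
proof -
  interpret prob_space M by (rule P)
  have sp1: "space G1 = space M" and sp2: "space G2 = space M"
    using s1 s2 by (auto simp: subalgebra_def)
  define A1 where "A1 = {x \<in> space M. u x > 0}"
  define A2 where "A2 = {x \<in> space M. u x < 0}"
  define B1 where "B1 = {x \<in> space M. v x > 0}"
  define B2 where "B2 = {x \<in> space M. v x < 0}"
  have A1: "A1 \<in> sets G1" unfolding A1_def sp1[symmetric] using uG by measurable
  have A2: "A2 \<in> sets G1" unfolding A2_def sp1[symmetric] using uG by measurable
  have B1: "B1 \<in> sets G2" unfolding B1_def sp2[symmetric] using vG by measurable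
  have B2: "B2 \<in> sets G2" unfolding B2_def sp2[symmetric] using vG by measurable
  have sM: "\<And>A. A \<in> sets G1 \<Longrightarrow> A \<in> sets M" "\<And>A. A \<in> sets G2 \<Longrightarrow> A \<in> sets M"
    using s1 s2 by (auto simp: subalgebra_def)
  note sets = sM(1)[OF A1] sM(1)[OF A2] sM(2)[OF B1] sM(2)[OF B2]
  have su: "\<And>x. x \<in> space M \<Longrightarrow> sgn (u x) = indicator A1 x - indicator A2 x"
    by (auto simp: A1_def A2_def sgn_if indicator_def)
  have sv: "\<And>x. x \<in> space M \<Longrightarrow> sgn (v x) = indicator B1 x - indicator B2 x"
    by (auto simp: B1_def B2_def sgn_if indicator_def)
  have ii: "\<And>A. A \<in> sets M \<Longrightarrow> integrable M (indicator A :: 'a \<Rightarrow> real)"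
    by (rule bdd_integrable[OF finite_measure_axioms, where B=1]) (auto simp: indicator_def)
  have mi: "\<And>A B. indicator A x * indicator B x = (indicator (A \<inter> B) x :: real)" for x
    by (auto simp: indicator_def)
  have intI: "\<And>A. A \<in> sets M \<Longrightarrow> (\<integral>x. indicator A x \<partial>M) = measure M A"
    by (simp add: integral_indicator Int_absorb2 sets.sets_into_space)
  define c where "c A B = measure M (A \<inter> B) - measure M A * measure M B" for A B
  have e1: "(\<integral>x. sgn (u x) * sgn (v x) \<partial>M) =
     (\<integral>x. indicator (A1 \<inter> B1) x - indicator (A1 \<inter> B2) x - indicator (A2 \<inter> B1) x + indicator (A2 \<inter> B2) x \<partial>M)"
    by (rule Bochner_Integration.integral_cong[OF refl]) (auto simp: su sv algebra_simps mi)
  also have "\<dots> = measure M (A1 \<inter> B1) - measure M (A1 \<inter> B2) - measure M (A2 \<inter> B1) + measure M (A2 \<inter> B2)"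
    using sets by (simp add: ii intI Int_absorb2 sets.Int)
  finally have e1: "(\<integral>x. sgn (u x) * sgn (v x) \<partial>M) = measure M (A1 \<inter> B1) - measure M (A1 \<inter> B2) - measure M (A2 \<inter> B1) + measure M (A2 \<inter> B2)" .
  have e2: "(\<integral>x. sgn (u x) \<partial>M) = measure M A1 - measure M A2"
    by (subst Bochner_Integration.integral_cong[OF refl su]) (use sets in \<open>auto simp: ii intI\<close>)
  have e3: "(\<integral>x. sgn (v x) \<partial>M) = measure M B1 - measure M B2"
    by (subst Bochner_Integration.integral_cong[OF refl sv]) (use sets in \<open>auto simp: ii intI\<close>)
  have "(\<integral>x. sgn (u x) * sgn (v x) \<partial>M) - (\<integral>x. sgn (u x) \<partial>M) * (\<integral>x. sgn (v x) \<partial>M)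
      = c A1 B1 - c A1 B2 - c A2 B1 + c A2 B2"
    unfolding e1 e2 e3 c_def by (simp add: algebra_simps)
  moreover have "\<bar>c A B\<bar> \<le> \<alpha>" if "A \<in> sets G1" "B \<in> sets G2" for A B
    unfolding c_def by (rule al[OF that])
  then have "\<bar>c A1 B1\<bar> \<le> \<alpha>" "\<bar>c A1 B2\<bar> \<le> \<alpha>" "\<bar>c A2 B1\<bar> \<le> \<alpha>" "\<bar>c A2 B2\<bar> \<le> \<alpha>"
    using A1 A2 B1 B2 by auto
  ultimately show ?thesis by linarith
qed

lemma cov_alpha:
  fixes f g :: "'a \<Rightarrow> real"
  assumes P: "prob_space M" and s1: "subalgebra M G1" and s2: "subalgebra M G2"
    and fG: "f \<in> borel_measurable G1" and fb: "\<And>x. x \<in> space M \<Longrightarrow> \<bar>f x\<bar> \<le> a"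
    and gG: "g \<in> borel_measurable G2" and gb: "\<And>x. x \<in> space M \<Longrightarrow> \<bar>g x\<bar> \<le> b"
    and al: "\<And>A B. A \<in> sets G1 \<Longrightarrow> B \<in> sets G2 \<Longrightarrow>
               \<bar>measure M (A \<inter> B) - measure M A * measure M B\<bar> \<le> \<alpha>"
  shows "\<bar>(\<integral>x. f x * g x \<partial>M) - (\<integral>x. f x \<partial>M) * (\<integral>x. g x \<partial>M)\<bar> \<le> 4 * a * b * \<alpha>"
proof -
  interpret prob_space M by (rule P)
  obtain x0 where x0: "x0 \<in> space M" using not_empty by blast
  have a0: "0 \<le> a" using fb[OF x0] by linarith
  have b0: "0 \<le> b" using gb[OF x0] by linarith
  have fM: "f \<in> borel_measurable M" by (rule measurable_from_subalg[OF s1 fG])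
  have gM: "g \<in> borel_measurable M" by (rule measurable_from_subalg[OF s2 gG])
  obtain u where uG: "u \<in> borel_measurable G1" and c1:
    "\<bar>(\<integral>x. f x * g x \<partial>M) - (\<integral>x. f x \<partial>M) * (\<integral>x. g x \<partial>M)\<bar>
       \<le> a * ((\<integral>x. sgn (u x) * g x \<partial>M) - (\<integral>x. sgn (u x) \<partial>M) * (\<integral>x. g x \<partial>M))"
    using cov_sign[OF P s1 fG fb gM gb] by blast
  have uM: "u \<in> borel_measurable M" by (rule measurable_from_subalg[OF s1 uG])
  have sM: "(\<lambda>x. sgn (u x)) \<in> borel_measurable M" using uM by measurable
  obtain v where vG: "v \<in> borel_measurable G2" and c2:
    "\<bar>(\<integral>x. g x * sgn (u x) \<partial>M) - (\<integral>x. g x \<partial>M) * (\<integral>x. sgn (u x) \<partial>M)\<bar>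
       \<le> b * ((\<integral>x. sgn (v x) * sgn (u x) \<partial>M) - (\<integral>x. sgn (v x) \<partial>M) * (\<integral>x. sgn (u x) \<partial>M))"
    using cov_sign[OF P s2 gG gb sM, where b=1] by (auto simp: abs_sgn_eq)
  have al': "\<And>A B. A \<in> sets G2 \<Longrightarrow> B \<in> sets G1 \<Longrightarrow>
               \<bar>measure M (A \<inter> B) - measure M A * measure M B\<bar> \<le> \<alpha>"
    using al by (metis Int_commute mult.commute)
  have c3: "\<bar>(\<integral>x. sgn (v x) * sgn (u x) \<partial>M) - (\<integral>x. sgn (v x) \<partial>M) * (\<integral>x. sgn (u x) \<partial>M)\<bar> \<le> 4 * \<alpha>"
    by (rule cov_sgn_sets[OF P s2 s1 vG uG al'])
  have "(\<integral>x. sgn (u x) * g x \<partial>M) - (\<integral>x. sgn (u x) \<partial>M) * (\<integral>x. g x \<partial>M)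
     \<le> b * (4 * \<alpha>)"
    using c2 c3 b0 by (simp add: mult.commute) (smt (verit) mult_left_mono)
  then have "a * ((\<integral>x. sgn (u x) * g x \<partial>M) - (\<integral>x. sgn (u x) \<partial>M) * (\<integral>x. g x \<partial>M)) \<le> a * (b * (4 * \<alpha>))"
    using a0 by (rule mult_left_mono)
  with c1 show ?thesis by (simp add: algebra_simps)
qed

lemma prod_abs_le:
  fixes z :: "'b \<Rightarrow> real"
  assumes "\<And>i. i \<in> I \<Longrightarrow> \<bar>z i\<bar> \<le> D"
  shows "\<bar>\<Prod>i\<in>I. z i\<bar> \<le> D ^ card I"
proof (cases "finite I")
  case True
  have "\<bar>\<Prod>i\<in>I. z i\<bar> = (\<Prod>i\<in>I. \<bar>z i\<bar>)" by (simp add: abs_prod)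
  also have "\<dots> \<le> (\<Prod>i\<in>I. D)" by (rule prod_mono) (use assms in auto)
  finally show ?thesis by simp
next
  case False then show ?thesis using assms by simp
qed

lemma prod_diff_le:
  fixes z w :: "'b \<Rightarrow> real"
  assumes "finite I" "1 \<le> D" "\<And>i. i \<in> I \<Longrightarrow> \<bar>z i\<bar> \<le> D" "\<And>i. i \<in> I \<Longrightarrow> \<bar>w i\<bar> \<le> D"
  shows "\<bar>(\<Prod>i\<in>I. z i) - (\<Prod>i\<in>I. w i)\<bar> \<le> D ^ card I * (\<Sum>i\<in>I. \<bar>z i - w i\<bar>)"
  using assms
proof (induction I rule: finite_induct)
  case empty then show ?case by simp
next
  case (insert x F)
  have pz: "\<bar>\<Prod>i\<in>F. z i\<bar> \<le> D ^ card F" by (rule prod_abs_le) (use insert in auto)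
  have IH: "\<bar>(\<Prod>i\<in>F. z i) - (\<Prod>i\<in>F. w i)\<bar> \<le> D ^ card F * (\<Sum>i\<in>F. \<bar>z i - w i\<bar>)"
    using insert by auto
  have wx: "\<bar>w x\<bar> \<le> D" using insert by auto
  have "(\<Prod>i\<in>insert x F. z i) - (\<Prod>i\<in>insert x F. w i)
      = (z x - w x) * (\<Prod>i\<in>F. z i) + w x * ((\<Prod>i\<in>F. z i) - (\<Prod>i\<in>F. w i))"
    using insert by (simp add: algebra_simps)
  also have "\<bar>\<dots>\<bar> \<le> \<bar>z x - w x\<bar> * D ^ card F + D * (D ^ card F * (\<Sum>i\<in>F. \<bar>z i - w i\<bar>))"
    by (rule order_trans[OF abs_triangle_ineq]) (use insert(4) in \<open>auto simp: abs_mult intro!: add_mono mult_mono pz IH wx\<close>)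
  also have "\<dots> \<le> D ^ card (insert x F) * (\<Sum>i\<in>insert x F. \<bar>z i - w i\<bar>)"
  proof -
    have "D ^ card F \<le> D ^ Suc (card F)" using insert(4) by (simp add: power_increasing)
    then have "\<bar>z x - w x\<bar> * D ^ card F \<le> \<bar>z x - w x\<bar> * D ^ Suc (card F)"
      by (rule mult_left_mono) simp
    then show ?thesis using insert by (simp add: algebra_simps)
  qed
  finally show ?case .
qed

lemma ext_int_of_int [simp]: "ereal (real_of_int i) \<in> ext_int_idx"
  unfolding ext_int_idx_def by blast
lemma ext_int_nat [simp]: "ereal (real n) \<in> ext_int_idx"
  using ext_int_of_int[of "int n"] by simp
lemma ext_int_diff [simp]: "ereal (real m - real h) \<in> ext_int_idx"
  using ext_int_of_int[of "int m - int h"] by simp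
lemma ext_int_add [simp]: "ereal (real m + real h) \<in> ext_int_idx"
  using ext_int_of_int[of "int m + int h"] by simp
lemma ext_int_inf [simp]: "\<infinity> \<in> ext_int_idx" "-\<infinity> \<in> ext_int_idx"
  unfolding ext_int_idx_def by auto

definition nd :: "nat \<Rightarrow> nat \<Rightarrow> nat" where "nd u v = (u - v) + (v - u)"


lemma ev_powr: "0 < a \<Longrightarrow> eventually (\<lambda>k::nat. c \<le> real k powr a) sequentially"
proof -
  assume a: "0 < a"
  have "filterlim (\<lambda>k::nat. real k powr a) at_top sequentially"
    by (rule filterlim_compose[OF real_powr_at_top[OF a] filterlim_real_sequentially])
  then show ?thesis by (simp add: filterlim_at_top)
qed


lemma geo_fin:
  fixes \<rho> :: real
  assumes r: "0 \<le> \<rho>" "\<rho> < 1" and f: "finite S"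
  shows "(\<Sum>d\<in>S. \<rho> ^ d) \<le> 1 / (1 - \<rho>)"
proof -
  have "(\<Sum>d\<in>S. \<rho> ^ d) \<le> (\<Sum>d. \<rho> ^ d)"
    by (rule sum_le_suminf[OF summable_geometric f]) (use r in auto)
  also have "\<dots> = 1 / (1 - \<rho>)" using suminf_geometric[of \<rho>] r by simp
  finally show ?thesis .
qed

lemma geo_nd:
  fixes \<rho> :: real
  assumes r: "0 \<le> \<rho>" "\<rho> < 1" and f: "finite S"
  shows "(\<Sum>m\<in>S. \<rho> ^ nd x m) \<le> 2 / (1 - \<rho>)"
proof -
  define S1 where "S1 = S \<inter> {m. x \<le> m}"
  define S2 where "S2 = S - {m. x \<le> m}"
  have f1: "finite S1" "finite S2" using f by (auto simp: S1_def S2_def)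
  have "(\<Sum>m\<in>S. \<rho> ^ nd x m) = (\<Sum>m\<in>S1. \<rho> ^ nd x m) + (\<Sum>m\<in>S2. \<rho> ^ nd x m)"
    unfolding S1_def S2_def using f by (rule sum.Int_Diff)
  also have "(\<Sum>m\<in>S1. \<rho> ^ nd x m) = (\<Sum>m\<in>S1. \<rho> ^ (m - x))"
    by (rule sum.cong) (auto simp: S1_def nd_def)
  also have "\<dots> = (\<Sum>d\<in>(\<lambda>m. m - x) ` S1. \<rho> ^ d)"
    by (rule sum.reindex[symmetric, unfolded comp_def]) (auto simp: inj_on_def S1_def)
  also have "(\<Sum>m\<in>S2. \<rho> ^ nd x m) = (\<Sum>m\<in>S2. \<rho> ^ (x - m))"
    by (rule sum.cong) (auto simp: S2_def nd_def)
  also have "\<dots> = (\<Sum>d\<in>(\<lambda>m. x - m) ` S2. \<rho> ^ d)"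
    by (rule sum.reindex[symmetric, unfolded comp_def]) (auto simp: inj_on_def S2_def)
  finally show ?thesis
    using geo_fin[OF r finite_imageI[OF f1(1)], of "\<lambda>m. m - x"]
          geo_fin[OF r finite_imageI[OF f1(2)], of "\<lambda>m. x - m"] by simp
qed

lemma B1_lemma:
  fixes q :: "nat \<Rightarrow> nat" and \<rho> :: real
  assumes r: "0 \<le> \<rho>" "\<rho> < 1" and inj: "inj_on q {N..}" and that: "finite A"
  shows "(\<Sum>k\<in>A. \<rho> ^ nd x (q k)) \<le> real N + 2 / (1 - \<rho>)"
proof -
  have "(\<Sum>k\<in>A. \<rho> ^ nd x (q k)) = (\<Sum>k\<in>A \<inter> {..<N}. \<rho> ^ nd x (q k)) + (\<Sum>k\<in>A - {..<N}. \<rho> ^ nd x (q k))"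
    by (rule sum.Int_Diff[OF that])
  also have "(\<Sum>k\<in>A \<inter> {..<N}. \<rho> ^ nd x (q k)) \<le> (\<Sum>k\<in>A \<inter> {..<N}. 1)"
    by (rule sum_mono) (use r in \<open>auto intro: power_le_one\<close>)
  also have "\<dots> \<le> real N"
  proof -
    have "card (A \<inter> {..<N}) \<le> card {..<N}" by (rule card_mono) auto
    then show ?thesis by simp
  qed
  also have "(\<Sum>k\<in>A - {..<N}. \<rho> ^ nd x (q k)) = (\<Sum>m\<in>q ` (A - {..<N}). \<rho> ^ nd x m)"
    by (rule sum.reindex[symmetric, unfolded comp_def]) (rule inj_on_subset[OF inj], auto)
  also have "\<dots> \<le> 2 / (1 - \<rho>)" by (rule geo_nd[OF r]) (use that in auto)
  finally show ?thesis by simp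
qed

lemma B2_lemma:
  fixes q q' :: "nat \<Rightarrow> nat" and \<rho> :: real
  assumes r: "0 \<le> \<rho>" "\<rho> < 1" and sep: "\<And>k. K \<le> k \<Longrightarrow> k \<le> nd (q k) (q' k)" and that: "finite A"
  shows "(\<Sum>k\<in>A. \<rho> ^ nd (q k) (q' k)) \<le> real K + 1 / (1 - \<rho>)"
proof -
  have "(\<Sum>k\<in>A. \<rho> ^ nd (q k) (q' k)) = (\<Sum>k\<in>A \<inter> {..<K}. \<rho> ^ nd (q k) (q' k)) + (\<Sum>k\<in>A - {..<K}. \<rho> ^ nd (q k) (q' k))"
    by (rule sum.Int_Diff[OF that])
  also have "(\<Sum>k\<in>A \<inter> {..<K}. \<rho> ^ nd (q k) (q' k)) \<le> (\<Sum>k\<in>A \<inter> {..<K}. 1)"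
    by (rule sum_mono) (use r in \<open>auto intro: power_le_one\<close>)
  also have "\<dots> \<le> real K"
  proof -
    have "card (A \<inter> {..<K}) \<le> card {..<K}" by (rule card_mono) auto
    then show ?thesis by simp
  qed
  also have "(\<Sum>k\<in>A - {..<K}. \<rho> ^ nd (q k) (q' k)) \<le> (\<Sum>k\<in>A - {..<K}. \<rho> ^ k)"
    by (rule sum_mono) (use r sep in \<open>auto intro: power_decreasing\<close>)
  also have "\<dots> \<le> 1 / (1 - \<rho>)" by (rule geo_fin[OF r]) (use that in auto)
  finally show ?thesis by simp
qed

lemma q_mono_tail:
  fixes q :: "nat \<Rightarrow> nat \<Rightarrow> nat"
  assumes q_growth: "\<And>j n. 2 \<le> j \<Longrightarrow> j \<le> L \<Longrightarrow> n \<ge> n0 \<Longrightarrow>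
                     real (q j (n + 1)) \<ge> real (q j n) + real n powr \<gamma>"
    and n0: "n0 > 1" and j: "2 \<le> j" "j \<le> L" and n: "n0 \<le> n"
  shows "q j n + d \<le> q j (n + d)"
proof (induction d)
  case 0 then show ?case by simp
next
  case (Suc d)
  have "0 < real (n + d) powr \<gamma>" using n n0 by simp
  then have "real (q j (n + d)) < real (q j (n + d + 1))"
    using q_growth[OF j, of "n + d"] n by linarith
  then have "q j (n + d) < q j (n + d + 1)" by simp
  then show ?case using Suc by simp
qed

lemma q_inj:
  fixes q :: "nat \<Rightarrow> nat \<Rightarrow> nat"
  assumes q_growth: "\<And>j n. 2 \<le> j \<Longrightarrow> j \<le> L \<Longrightarrow> n \<ge> n0 \<Longrightarrow>
                     real (q j (n + 1)) \<ge> real (q j n) + real n powr \<gamma>"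
    and n0: "n0 > 1" and q0: "\<And>n. q 0 n = n" and r: "r \<ge> 2" and q1: "\<And>n. q 1 n = r * n + p"
    and j: "j \<le> L"
  shows "inj_on (q j) {n0..}"
proof (cases "j \<le> 1")
  case True
  then have "j = 0 \<or> j = 1" by auto
  then show ?thesis
  proof
    assume "j = 1"
    have "inj (q 1)" using r by (auto simp: inj_def q1[simplified])
    then show ?thesis using \<open>j = 1\<close> by (auto intro: inj_on_subset)
  qed (auto simp: inj_on_def q0)
next
  case False
  then have j2: "2 \<le> j" by simp
  have lt: "q j k < q j k'" if "n0 \<le> k" "k < k'" for k k'
  proof -
    have "q j k + (k' - k) \<le> q j (k + (k' - k))" by (rule q_mono_tail[OF q_growth n0 j2 j that(1)])
    then show ?thesis using that by simp
  qed
  show ?thesis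
  proof (rule inj_onI)
    fix k k' assume "k \<in> {n0..}" "k' \<in> {n0..}" "q j k = q j k'"
    then show "k = k'" using lt[of k k'] lt[of k' k] by (cases k k' rule: linorder_cases) auto
  qed
qed

lemma q_sep:
  fixes q :: "nat \<Rightarrow> nat \<Rightarrow> nat" and \<gamma> :: real
  assumes q_growth: "\<And>j n. 2 \<le> j \<Longrightarrow> j \<le> L \<Longrightarrow> n \<ge> n0 \<Longrightarrow>
                     real (q j (n + 1)) \<ge> real (q j n) + real n powr \<gamma>"
    and q_nest: "\<And>j n. 1 \<le> j \<Longrightarrow> j \<le> L - 1 \<Longrightarrow> n \<ge> n0 \<Longrightarrow>
                     real (q (j + 1) (nat \<lfloor>real n powr (1 - \<gamma>)\<rfloor>)) \<ge> real (q j n) * real n powr \<gamma>"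
    and n0: "n0 > 1" and q0: "\<And>n. q 0 n = n" and r: "r \<ge> 2" and q1: "\<And>n. q 1 n = r * n + p"
    and gamma: "0 < \<gamma>" "\<gamma> < 1"
  shows "\<exists>K. \<forall>k\<ge>K. \<forall>i i'. i \<le> L \<longrightarrow> i' \<le> L \<longrightarrow> i \<noteq> i' \<longrightarrow> k \<le> nd (q i k) (q i' k)"
proof -
  have "eventually (\<lambda>k::nat. n0 \<le> k) sequentially" by (rule eventually_ge_at_top)
  moreover have "eventually (\<lambda>k::nat. 3/2 \<le> real k powr \<gamma>) sequentially" by (rule ev_powr[OF gamma(1)])
  moreover have "eventually (\<lambda>k::nat. real n0 \<le> real k powr (1 - \<gamma>)) sequentially" by (rule ev_powr) (use gamma in simp)
  ultimately have "eventually (\<lambda>k::nat. n0 \<le> k \<and> 3/2 \<le> real k powr \<gamma> \<and> real n0 \<le> real k powr (1 - \<gamma>)) sequentially"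
    by eventually_elim auto
  then obtain K where K: "\<And>k. K \<le> k \<Longrightarrow> n0 \<le> k \<and> 3/2 \<le> real k powr \<gamma> \<and> real n0 \<le> real k powr (1 - \<gamma>)"
    by (auto simp: eventually_sequentially)
  have step: "q j k + k \<le> q (j + 1) k" if k: "K \<le> k" and j: "1 \<le> j" "j < L" and qj: "2 * k \<le> q j k" for j k
  proof -
    from K[OF k] have kn0: "n0 \<le> k" and kg: "3/2 \<le> real k powr \<gamma>" and kg2: "real n0 \<le> real k powr (1 - \<gamma>)" by auto
    define m where "m = nat \<lfloor>real k powr (1 - \<gamma>)\<rfloor>"
    have k1: "1 \<le> real k" using kn0 n0 by simp
    have mn0: "n0 \<le> m" unfolding m_def using kg2 by (simp add: le_nat_floor)
    have "real k powr (1 - \<gamma>) \<le> real k powr 1" by (rule powr_mono) (use gamma k1 in auto)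
    then have "real k powr (1 - \<gamma>) \<le> real k" using k1 by simp
    then have "\<lfloor>real k powr (1 - \<gamma>)\<rfloor> \<le> \<lfloor>real k\<rfloor>" by (rule floor_mono)
    then have mk: "m \<le> k" unfolding m_def by simp
    have j2: "2 \<le> j + 1" "j + 1 \<le> L" using j by auto
    have "q (j + 1) m + (k - m) \<le> q (j + 1) (m + (k - m))"
      by (rule q_mono_tail[OF q_growth n0 j2 mn0])
    then have qm: "q (j + 1) m \<le> q (j + 1) k" using mk by simp
    have nest: "real (q (j + 1) m) \<ge> real (q j k) * real k powr \<gamma>"
      unfolding m_def by (rule q_nest) (use j kn0 in auto)
    have "real (q j k) + real k \<le> real (q j k) * real k powr \<gamma>"
    proof -
      have "real (2 * k) * (1/2) \<le> real (q j k) * (real k powr \<gamma> - 1)"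
        by (rule mult_mono) (use qj kg in auto)
      then show ?thesis by (simp add: algebra_simps)
    qed
    then have "real (q j k + k) \<le> real (q (j + 1) k)" using nest qm by simp
    then show ?thesis by linarith
  qed
  have big: "2 * k \<le> q j k" if k: "K \<le> k" and j: "1 \<le> j" "j \<le> L" for j k
    using j
  proof (induction j)
    case 0 then show ?case by simp
  next
    case (Suc j)
    show ?case
    proof (cases "j = 0")
      case True
      have h: "2 * k \<le> r * k" by (rule mult_le_mono1[OF r])
      have e: "q (Suc j) k = r * k + p" using True q1[of k] by simp
      show ?thesis using e h by linarith
    next
      case False
      then have "2 * k \<le> q j k" using Suc by auto
      then have "q j k + k \<le> q (j + 1) k" using step[OF k] Suc.prems False by simp
      then show ?thesis using \<open>2 * k \<le> q j k\<close> by simp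
    qed
  qed
  have adj: "q j k + k \<le> q (j + 1) k" if k: "K \<le> k" and j: "j < L" for j k
  proof (cases "j = 0")
    case True
    have h: "2 * k \<le> r * k" by (rule mult_le_mono1[OF r])
    have e: "q (j + 1) k = r * k + p" "q j k = k" using True q1[of k] q0[of k] by simp_all
    show ?thesis using e h by linarith
  next
    case False then show ?thesis using step[OF k _ j big[OF k]] j by simp
  qed
  have chain: "q i k + k \<le> q (i + 1 + d) k" if k: "K \<le> k" and "i + 1 + d \<le> L" for i d k
    using that(2)
  proof (induction d)
    case 0 then show ?case using adj[OF k, of i] by simp
  next
    case (Suc d)
    then have "q i k + k \<le> q (i + 1 + d) k" by simp
    moreover have "q (i + 1 + d) k + k \<le> q (i + 1 + d + 1) k" by (rule adj[OF k]) (use Suc in simp)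
    ultimately show ?case by simp
  qed
  have "\<forall>k\<ge>K. \<forall>i i'. i \<le> L \<longrightarrow> i' \<le> L \<longrightarrow> i \<noteq> i' \<longrightarrow> k \<le> nd (q i k) (q i' k)"
  proof (intro allI impI)
    fix k i i' assume k: "K \<le> k" and "i \<le> L" "i' \<le> L" "i \<noteq> i'"
    show "k \<le> nd (q i k) (q i' k)"
    proof (cases "i < i'")
      case True
      then have "q i k + k \<le> q (i + 1 + (i' - i - 1)) k" using chain[OF k, of i "i' - i - 1"] \<open>i' \<le> L\<close> by simp
      then show ?thesis using True by (simp add: nd_def)
    next
      case False
      then have "i' < i" using \<open>i \<noteq> i'\<close> by simp
      then have "q i' k + k \<le> q (i' + 1 + (i - i' - 1)) k" using chain[OF k, of i' "i - i' - 1"] \<open>i \<le> L\<close> by simp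
      then show ?thesis using \<open>i' < i\<close> by (simp add: nd_def)
    qed
  qed
  then show ?thesis by blast
qed


definition PSum :: "real \<Rightarrow> ('b \<Rightarrow> nat) \<Rightarrow> 'b set \<Rightarrow> real" where
  "PSum \<rho> pos I = (\<Sum>i\<in>I. \<Sum>i'\<in>I - {i}. \<rho> ^ nd (pos i) (pos i'))"

lemma PSum_nonneg: "0 \<le> \<rho> \<Longrightarrow> 0 \<le> PSum \<rho> pos I"
  unfolding PSum_def by (intro sum_nonneg) auto

lemma PSum_remove:
  assumes "finite I" "i0 \<in> I" "i1 \<in> I" "i1 \<noteq> i0" "0 \<le> \<rho>"
  shows "PSum \<rho> pos (I - {i0}) + \<rho> ^ nd (pos i0) (pos i1) \<le> PSum \<rho> pos I"
proof -
  let ?t = "\<lambda>i i'. \<rho> ^ nd (pos i) (pos i')"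
  have "PSum \<rho> pos I = (\<Sum>i'\<in>I - {i0}. ?t i0 i') + (\<Sum>i\<in>I - {i0}. \<Sum>i'\<in>I - {i}. ?t i i')"
    unfolding PSum_def using assms by (simp add: sum.remove)
  moreover have "?t i0 i1 \<le> (\<Sum>i'\<in>I - {i0}. ?t i0 i')"
    by (rule member_le_sum) (use assms in auto)
  moreover have "PSum \<rho> pos (I - {i0}) \<le> (\<Sum>i\<in>I - {i0}. \<Sum>i'\<in>I - {i}. ?t i i')"
    unfolding PSum_def
    by (intro sum_mono sum_mono2) (use assms in auto)
  ultimately show ?thesis by linarith
qed

definition pos2 :: "(nat \<Rightarrow> nat \<Rightarrow> nat) \<Rightarrow> nat \<Rightarrow> nat \<Rightarrow> nat \<times> bool \<Rightarrow> nat" where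
  "pos2 q k k' = (\<lambda>(j, b). q j (if b then k' else k))"

lemma nd_sym: "nd u v = nd v u" unfolding nd_def by simp

lemma sumS0:
  fixes q :: "nat \<Rightarrow> nat \<Rightarrow> nat" and \<rho> :: real
  assumes fS: "finite S"
    and B2: "\<And>j j'. j \<le> L \<Longrightarrow> j' \<le> L \<Longrightarrow> j \<noteq> j' \<Longrightarrow> (\<Sum>k\<in>S. \<rho> ^ nd (q j k) (q j' k)) \<le> B2"
    and B2nn: "0 \<le> B2"
  shows "(\<Sum>k\<in>S. PSum \<rho> (\<lambda>j. q j k) {0..L}) \<le> real (L + 1) * real (L + 1) * B2"
proof -
  let ?J = "{0..L}"
  have "(\<Sum>k\<in>S. PSum \<rho> (\<lambda>j. q j k) ?J) = (\<Sum>j\<in>?J. \<Sum>k\<in>S. \<Sum>j'\<in>?J - {j}. \<rho> ^ nd (q j k) (q j' k))"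
    unfolding PSum_def by (rule sum.swap)
  also have "\<dots> = (\<Sum>j\<in>?J. \<Sum>j'\<in>?J - {j}. \<Sum>k\<in>S. \<rho> ^ nd (q j k) (q j' k))"
    by (rule sum.cong[OF refl], rule sum.swap)
  also have "\<dots> \<le> (\<Sum>j\<in>?J. real (L + 1) * B2)"
  proof (rule sum_mono)
    fix j assume j: "j \<in> ?J"
    have "(\<Sum>j'\<in>?J - {j}. \<Sum>k\<in>S. \<rho> ^ nd (q j k) (q j' k)) \<le> real (card (?J - {j})) * B2"
      by (rule sum_bounded_above) (use j B2 in auto)
    also have "\<dots> \<le> real (L + 1) * B2"
      by (rule mult_right_mono) (use B2nn j in auto)
    finally show "(\<Sum>j'\<in>?J - {j}. \<Sum>k\<in>S. \<rho> ^ nd (q j k) (q j' k)) \<le> real (L + 1) * B2" .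
  qed
  also have "\<dots> = real (L + 1) * real (L + 1) * B2" by simp
  finally show ?thesis .
qed

lemma sumS2:
  fixes q :: "nat \<Rightarrow> nat \<Rightarrow> nat" and \<rho> :: real
  assumes fS: "finite S"
    and B1: "\<And>j x. j \<le> L \<Longrightarrow> (\<Sum>k\<in>S. \<rho> ^ nd x (q j k)) \<le> B1"
    and B2: "\<And>j j'. j \<le> L \<Longrightarrow> j' \<le> L \<Longrightarrow> j \<noteq> j' \<Longrightarrow> (\<Sum>k\<in>S. \<rho> ^ nd (q j k) (q j' k)) \<le> B2"
    and B1nn: "0 \<le> B1" and B2nn: "0 \<le> B2"
  shows "(\<Sum>k\<in>S. \<Sum>k'\<in>S. PSum \<rho> (pos2 q k k') ({0..L} \<times> UNIV))
     \<le> real (card ({0..L} \<times> (UNIV::bool set))) * real (card ({0..L} \<times> (UNIV::bool set))) * (real (card S) * (B1 + B2))"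
proof -
  let ?I = "{0..L} \<times> (UNIV::bool set)"
  let ?t = "\<lambda>k k' i i'. \<rho> ^ nd (pos2 q k k' i) (pos2 q k k' i')"
  have "(\<Sum>k\<in>S. \<Sum>k'\<in>S. PSum \<rho> (pos2 q k k') ?I) = (\<Sum>k\<in>S. \<Sum>k'\<in>S. \<Sum>i\<in>?I. \<Sum>i'\<in>?I - {i}. ?t k k' i i')"
    unfolding PSum_def ..
  also have "\<dots> = (\<Sum>k\<in>S. \<Sum>i\<in>?I. \<Sum>k'\<in>S. \<Sum>i'\<in>?I - {i}. ?t k k' i i')"
    by (rule sum.cong[OF refl], rule sum.swap)
  also have "\<dots> = (\<Sum>i\<in>?I. \<Sum>k\<in>S. \<Sum>k'\<in>S. \<Sum>i'\<in>?I - {i}. ?t k k' i i')"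
    by (rule sum.swap)
  also have "\<dots> = (\<Sum>i\<in>?I. \<Sum>k\<in>S. \<Sum>i'\<in>?I - {i}. \<Sum>k'\<in>S. ?t k k' i i')"
    by (rule sum.cong[OF refl], rule sum.cong[OF refl], rule sum.swap)
  also have "\<dots> = (\<Sum>i\<in>?I. \<Sum>i'\<in>?I - {i}. \<Sum>k\<in>S. \<Sum>k'\<in>S. ?t k k' i i')"
    by (rule sum.cong[OF refl], rule sum.swap)
  also have "\<dots> \<le> (\<Sum>i\<in>?I. \<Sum>i'\<in>?I - {i}. real (card S) * (B1 + B2))"
  proof (rule sum_mono, rule sum_mono)
    fix i i' assume i: "i \<in> ?I" and i': "i' \<in> ?I - {i}"
    obtain j b where ij: "i = (j, b)" by (cases i)
    obtain j' b' where ij': "i' = (j', b')" by (cases i')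
    have jL: "j \<le> L" "j' \<le> L" using i i' ij ij' by auto
    have ne: "(j, b) \<noteq> (j', b')" using i' ij ij' by auto
    have cS: "(\<Sum>k\<in>S. c) = real (card S) * c" for c :: real by simp
    have "(\<Sum>k\<in>S. \<Sum>k'\<in>S. ?t k k' i i') \<le> real (card S) * (B1 + B2)"
    proof (cases b; cases b')
      assume "b" "b'"
      then have jj: "j \<noteq> j'" using ne by auto
      have "(\<Sum>k\<in>S. \<Sum>k'\<in>S. ?t k k' i i') = (\<Sum>k\<in>S. \<Sum>k'\<in>S. \<rho> ^ nd (q j k') (q j' k'))"
        using \<open>b\<close> \<open>b'\<close> by (simp add: ij ij' pos2_def)
      also have "\<dots> = real (card S) * (\<Sum>k'\<in>S. \<rho> ^ nd (q j k') (q j' k'))" by simp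
      also have "\<dots> \<le> real (card S) * (B1 + B2)"
        by (rule mult_left_mono) (use B2[OF jL jj] B1nn in auto)
      finally show ?thesis .
    next
      assume "\<not> b" "\<not> b'"
      then have jj: "j \<noteq> j'" using ne by auto
      have "(\<Sum>k\<in>S. \<Sum>k'\<in>S. ?t k k' i i') = (\<Sum>k\<in>S. real (card S) * \<rho> ^ nd (q j k) (q j' k))"
        using \<open>\<not> b\<close> \<open>\<not> b'\<close> by (simp add: ij ij' pos2_def)
      also have "\<dots> = real (card S) * (\<Sum>k\<in>S. \<rho> ^ nd (q j k) (q j' k))" by (simp add: sum_distrib_left)
      also have "\<dots> \<le> real (card S) * (B1 + B2)"
        by (rule mult_left_mono) (use B2[OF jL jj] B1nn in auto)
      finally show ?thesis .
    next
      assume "\<not> b" "b'"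
      have "(\<Sum>k\<in>S. \<Sum>k'\<in>S. ?t k k' i i') = (\<Sum>k\<in>S. \<Sum>k'\<in>S. \<rho> ^ nd (q j k) (q j' k'))"
        using \<open>\<not> b\<close> \<open>b'\<close> by (simp add: ij ij' pos2_def)
      also have "\<dots> \<le> (\<Sum>k\<in>S. B1)" by (rule sum_mono) (rule B1[OF jL(2)])
      also have "\<dots> \<le> real (card S) * (B1 + B2)" using B2nn by (simp add: mult_left_mono)
      finally show ?thesis .
    next
      assume "b" "\<not> b'"
      have "(\<Sum>k\<in>S. \<Sum>k'\<in>S. ?t k k' i i') = (\<Sum>k\<in>S. \<Sum>k'\<in>S. \<rho> ^ nd (q j' k) (q j k'))"
        using \<open>b\<close> \<open>\<not> b'\<close> by (simp add: ij ij' pos2_def nd_sym)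
      also have "\<dots> \<le> (\<Sum>k\<in>S. B1)" by (rule sum_mono) (rule B1[OF jL(1)])
      also have "\<dots> \<le> real (card S) * (B1 + B2)" using B2nn by (simp add: mult_left_mono)
      finally show ?thesis .
    qed
    then show "(\<Sum>k\<in>S. \<Sum>k'\<in>S. ?t k k' i i') \<le> real (card S) * (B1 + B2)" .
  qed
  also have "\<dots> \<le> (\<Sum>i\<in>?I. real (card ?I) * (real (card S) * (B1 + B2)))"
  proof (rule sum_mono)
    fix i assume "i \<in> ?I"
    have "(\<Sum>i'\<in>?I - {i}. real (card S) * (B1 + B2)) = real (card (?I - {i})) * (real (card S) * (B1 + B2))" by simp
    also have "\<dots> \<le> real (card ?I) * (real (card S) * (B1 + B2))"
    proof (rule mult_right_mono)
      have "card (?I - {i}) \<le> card ?I" by (rule card_mono) auto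
      then show "real (card (?I - {i})) \<le> real (card ?I)" by simp
    qed (use B1nn B2nn in auto)
    finally show "(\<Sum>i'\<in>?I - {i}. real (card S) * (B1 + B2)) \<le> real (card ?I) * (real (card S) * (B1 + B2))" .
  qed
  also have "\<dots> = real (card ?I) * real (card ?I) * (real (card S) * (B1 + B2))" by simp
  finally show ?thesis .
qed

locale mixs = prob_space M for M :: "'a measure" +
  fixes L :: nat and X :: "nat \<Rightarrow> nat \<Rightarrow> 'a \<Rightarrow> real" and D :: real
    and F :: "ereal \<Rightarrow> ereal \<Rightarrow> 'a measure" and \<kappa> :: real
  assumes X_meas: "\<And>j n. j \<le> L \<Longrightarrow> X j n \<in> borel_measurable M"
    and X_stat: "\<And>j. j \<le> L \<Longrightarrow> stationary_proc M (X j)"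
    and X_bdd: "\<And>j n. j \<le> L \<Longrightarrow> AE \<omega> in M. \<bar>X j n \<omega>\<bar> \<le> D"
    and D1: "1 \<le> D"
    and F_sub: "\<And>k l. k \<in> ext_int_idx \<Longrightarrow> l \<in> ext_int_idx \<Longrightarrow> subalgebra M (F k l)"
    and F_mono: "\<And>k l k' l'. k \<in> ext_int_idx \<Longrightarrow> l \<in> ext_int_idx \<Longrightarrow> k' \<in> ext_int_idx \<Longrightarrow>
                   l' \<in> ext_int_idx \<Longrightarrow> k' \<le> k \<Longrightarrow> l \<le> l' \<Longrightarrow> sets (F k l) \<subseteq> sets (F k' l')"
    and kappa: "\<kappa> > 0"
    and mixing: "\<And>n. alpha_mix M F n + Max ((\<lambda>j. beta_mix M F (X j) n) ` {0..L})
                        \<le> exp (- \<kappa> * real n) / \<kappa>"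
begin

lemma F_space: "k \<in> ext_int_idx \<Longrightarrow> l \<in> ext_int_idx \<Longrightarrow> space (F k l) = space M"
  using F_sub by (auto simp: subalgebra_def)

lemma F_subF: "k \<in> ext_int_idx \<Longrightarrow> l \<in> ext_int_idx \<Longrightarrow> k' \<in> ext_int_idx \<Longrightarrow>
   l' \<in> ext_int_idx \<Longrightarrow> k' \<le> k \<Longrightarrow> l \<le> l' \<Longrightarrow> subalgebra (F k' l') (F k l)"
  unfolding subalgebra_def using F_mono F_space by auto

lemma F_meas_mono: "f \<in> borel_measurable (F k l) \<Longrightarrow> k \<in> ext_int_idx \<Longrightarrow> l \<in> ext_int_idx \<Longrightarrow> k' \<in> ext_int_idx \<Longrightarrow>
   l' \<in> ext_int_idx \<Longrightarrow> k' \<le> k \<Longrightarrow> l \<le> l' \<Longrightarrow> f \<in> borel_measurable (F k' l')"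
  by (rule measurable_from_subalg[OF F_subF])

lemma F_meas_M: "f \<in> borel_measurable (F k l) \<Longrightarrow> k \<in> ext_int_idx \<Longrightarrow> l \<in> ext_int_idx \<Longrightarrow> f \<in> borel_measurable M"
  by (rule measurable_from_subalg[OF F_sub])

lemma sfs: "k \<in> ext_int_idx \<Longrightarrow> l \<in> ext_int_idx \<Longrightarrow> sigma_finite_subalgebra M (F k l)"
  by (rule finite_measure_subalgebra_is_sigma_finite) (unfold_locales, rule F_sub)

lemma D0: "0 \<le> D" using D1 by simp

lemma alpha_elem:
  assumes "A \<in> sets (F (-\<infinity>) (ereal (real k)))" "B \<in> sets (F (ereal (real (k + n))) \<infinity>)"
  shows "\<bar>measure M (A \<inter> B) - measure M A * measure M B\<bar> \<le> alpha_mix M F n"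
proof -
  have b: "bdd_above {\<bar>measure M (A \<inter> B) - measure M A * measure M B\<bar> | k A B.
       A \<in> sets (F (-\<infinity>) (ereal (real k))) \<and> B \<in> sets (F (ereal (real (k + n))) \<infinity>)}"
  proof (rule bdd_aboveI[where M=1], clarify)
    fix k A B
    have "0 \<le> measure M (A \<inter> B)" "measure M (A \<inter> B) \<le> 1" "0 \<le> measure M A" "measure M A \<le> 1"
      "0 \<le> measure M B" "measure M B \<le> 1" by auto
    note h = this
    have "measure M A * measure M B \<le> 1" "0 \<le> measure M A * measure M B"
      using h by (auto intro: mult_le_one)
    then show "\<bar>measure M (A \<inter> B) - measure M A * measure M B\<bar> \<le> 1"
      unfolding abs_le_iff using h by linarith
  qed
  show ?thesis unfolding alpha_mix_def
    by (rule cSup_upper[OF _ b]) (use assms in blast)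
qed

lemma alpha_nonneg: "0 \<le> alpha_mix M F n"
proof -
  have "{} \<in> sets (F (-\<infinity>) (ereal (real 0)))" "{} \<in> sets (F (ereal (real (0 + n))) \<infinity>)" by auto
  from alpha_elem[OF this] show ?thesis by simp
qed

lemma cond_abs_le:
  assumes "k \<in> ext_int_idx" "l \<in> ext_int_idx" "integrable M f"
  shows "(\<integral>x. \<bar>real_cond_exp M (F k l) f x\<bar> \<partial>M) \<le> (\<integral>x. \<bar>f x\<bar> \<partial>M)"
proof -
  interpret sigma_finite_subalgebra M "F k l" by (rule sfs[OF assms(1,2)])
  let ?u = "real_cond_exp M (F k l) f"
  have fM: "f \<in> borel_measurable M" using assms(3) by auto
  have uM: "?u \<in> borel_measurable M" by (rule measurable_from_subalg[OF subalg]) simp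
  have sG: "(\<lambda>x. sgn (?u x)) \<in> borel_measurable (F k l)" by measurable
  have i1: "integrable M (\<lambda>x. sgn (?u x) * f x)"
    by (rule Bochner_Integration.integrable_bound[OF assms(3)]) (use uM fM in measurable, auto simp: abs_mult abs_sgn_eq)
  have "(\<integral>x. \<bar>?u x\<bar> \<partial>M) = (\<integral>x. sgn (?u x) * ?u x \<partial>M)"
    by (simp add: abs_sgn mult.commute)
  also have "\<dots> = (\<integral>x. sgn (?u x) * f x \<partial>M)"
    by (rule real_cond_exp_intg(2)[OF i1 sG fM])
  also have "\<dots> \<le> (\<integral>x. \<bar>f x\<bar> \<partial>M)"
    by (rule integral_mono[OF i1]) (use assms(3) in \<open>auto simp: sgn_if\<close>)
  finally show ?thesis .
qed

lemma X_int: "j \<le> L \<Longrightarrow> integrable M (X j n)"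
  by (rule integrable_const_bound[where B=D]) (use X_bdd X_meas in auto)

lemma X_abs_int_le: "j \<le> L \<Longrightarrow> (\<integral>x. \<bar>X j n x\<bar> \<partial>M) \<le> D"
  by (rule integral_le_const) (use X_int X_bdd in auto)

abbreviation CEX where
  "CEX j m h \<equiv> real_cond_exp M (F (ereal (real m - real h)) (ereal (real m + real h))) (X j m)"

lemma beta_elem:
  assumes "j \<le> L"
  shows "(\<integral>\<omega>. \<bar>X j m \<omega> - CEX j m h \<omega>\<bar> \<partial>M) \<le> beta_mix M F (X j) h"
proof -
  have i: "integrable M (CEX j m' h)" for m'
  proof -
    interpret sigma_finite_subalgebra M "F (ereal (real m' - real h)) (ereal (real m' + real h))"
      by (rule sfs) auto
    show ?thesis by (rule real_cond_exp_int(1)[OF X_int[OF assms]])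
  qed
  have b: "bdd_above {(\<integral>\<omega>. \<bar>X j m \<omega> - CEX j m h \<omega>\<bar> \<partial>M) | m. True}"
  proof (rule bdd_aboveI[where M="2*D"], clarify)
    fix m
    have "(\<integral>\<omega>. \<bar>X j m \<omega> - CEX j m h \<omega>\<bar> \<partial>M) \<le> (\<integral>\<omega>. \<bar>X j m \<omega>\<bar> + \<bar>CEX j m h \<omega>\<bar> \<partial>M)"
      by (rule integral_mono) (use i X_int[OF assms] in auto)
    also have "\<dots> = (\<integral>\<omega>. \<bar>X j m \<omega>\<bar> \<partial>M) + (\<integral>\<omega>. \<bar>CEX j m h \<omega>\<bar> \<partial>M)"
      by (rule Bochner_Integration.integral_add) (use i X_int[OF assms] in auto)
    also have "\<dots> \<le> D + D"
      using X_abs_int_le[OF assms, of m] cond_abs_le[OF _ _ X_int[OF assms], of "ereal (real m - real h)" "ereal (real m + real h)" m]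
      by simp
    finally show "(\<integral>\<omega>. \<bar>X j m \<omega> - CEX j m h \<omega>\<bar> \<partial>M) \<le> 2 * D" by simp
  qed
  show ?thesis unfolding beta_mix_def by (rule cSup_upper[OF _ b]) blast
qed

lemma beta_nonneg: "j \<le> L \<Longrightarrow> 0 \<le> beta_mix M F (X j) h"
  by (rule order_trans[OF _ beta_elem[of j 0]]) auto

lemma beta_bound:
  assumes "j \<le> L"
  shows "(\<integral>\<omega>. \<bar>X j m \<omega> - CEX j m h \<omega>\<bar> \<partial>M) \<le> exp (- \<kappa> * real h) / \<kappa>"
proof -
  have "beta_mix M F (X j) h \<le> Max ((\<lambda>j. beta_mix M F (X j) h) ` {0..L})"
    by (rule Max_ge) (use assms in auto)
  then show ?thesis using beta_elem[OF assms, of m h] mixing[of h] alpha_nonneg[of h] by linarith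
qed

lemma alpha_bound: "alpha_mix M F n \<le> exp (- \<kappa> * real n) / \<kappa>"
proof -
  have "beta_mix M F (X 0) n \<le> Max ((\<lambda>j. beta_mix M F (X j) n) ` {0..L})"
    by (rule Max_ge) auto
  then show ?thesis using beta_nonneg[of 0 n] mixing[of n] by linarith
qed

definition clip :: "real \<Rightarrow> real" where "clip x = max (-D) (min D x)"
definition Y where "Y j n \<omega> = clip (X j n \<omega>)"
definition W where "W j m h \<omega> = clip (CEX j m h \<omega>)"

lemma clip_abs: "\<bar>clip x\<bar> \<le> D" using D0 by (simp add: clip_def)
lemma clip_lip: "\<bar>clip x - clip y\<bar> \<le> \<bar>x - y\<bar>" by (simp add: clip_def)
lemma clip_id: "\<bar>x\<bar> \<le> D \<Longrightarrow> clip x = x" by (simp add: clip_def)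
lemma clip_meas[measurable]: "clip \<in> borel_measurable borel" unfolding clip_def by measurable

lemma Y_meas: "j \<le> L \<Longrightarrow> Y j n \<in> borel_measurable M"
  unfolding Y_def[abs_def] using X_meas[of j n] by measurable
lemma Y_abs: "\<bar>Y j n \<omega>\<bar> \<le> D" unfolding Y_def by (rule clip_abs)
lemma W_abs: "\<bar>W j m h \<omega>\<bar> \<le> D" unfolding W_def by (rule clip_abs)

lemma W_measF: "W j m h \<in> borel_measurable (F (ereal (real m - real h)) (ereal (real m + real h)))"
proof -
  interpret sigma_finite_subalgebra M "F (ereal (real m - real h)) (ereal (real m + real h))"
    by (rule sfs) auto
  show ?thesis unfolding W_def[abs_def] by measurable
qed

lemma W_meas: "W j m h \<in> borel_measurable M"
  by (rule F_meas_M[OF W_measF]) auto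

lemma YW_bound:
  assumes "j \<le> L"
  shows "(\<integral>\<omega>. \<bar>Y j m \<omega> - W j m h \<omega>\<bar> \<partial>M) \<le> exp (- \<kappa> * real h) / \<kappa>"
proof -
  interpret sigma_finite_subalgebra M "F (ereal (real m - real h)) (ereal (real m + real h))"
    by (rule sfs) auto
  have i: "integrable M (CEX j m h)" by (rule real_cond_exp_int(1)[OF X_int[OF assms]])
  have "(\<integral>\<omega>. \<bar>Y j m \<omega> - W j m h \<omega>\<bar> \<partial>M) \<le> (\<integral>\<omega>. \<bar>X j m \<omega> - CEX j m h \<omega>\<bar> \<partial>M)"
  proof (rule integral_mono)
    show "integrable M (\<lambda>\<omega>. \<bar>Y j m \<omega> - W j m h \<omega>\<bar>)"
    proof (rule bdd_integrable[OF finite_measure_axioms, where B="2*D"])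
      show "(\<lambda>\<omega>. \<bar>Y j m \<omega> - W j m h \<omega>\<bar>) \<in> borel_measurable M"
        using Y_meas[OF assms] W_meas by measurable
      show "\<bar>\<bar>Y j m x - W j m h x\<bar>\<bar> \<le> 2 * D" for x
        using Y_abs[of j m x] W_abs[of j m h x] by linarith
    qed
    show "integrable M (\<lambda>\<omega>. \<bar>X j m \<omega> - CEX j m h \<omega>\<bar>)" using i X_int[OF assms] by auto
  qed (simp add: Y_def W_def clip_lip)
  also have "\<dots> \<le> exp (- \<kappa> * real h) / \<kappa>" by (rule beta_bound[OF assms])
  finally show ?thesis .
qed

lemma Y_AE: "AE \<omega> in M. \<forall>j n. j \<le> L \<longrightarrow> X j n \<omega> = Y j n \<omega>"
proof -
  have "AE \<omega> in M. j \<le> L \<longrightarrow> X j n \<omega> = Y j n \<omega>" for j n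
  proof (cases "j \<le> L")
    case True
    show ?thesis using X_bdd[OF True, of n] by eventually_elim (simp add: Y_def clip_id)
  qed simp
  then show ?thesis by (simp add: AE_all_countable)
qed

lemma X_int_stat: "j \<le> L \<Longrightarrow> (\<integral>\<omega>. X j m \<omega> \<partial>M) = (\<integral>\<omega>. X j 0 \<omega> \<partial>M)"
proof -
  assume j: "j \<le> L"
  have st: "distr M (PiM UNIV (\<lambda>_. borel)) (\<lambda>\<omega> n. X j (n + m) \<omega>)
             = distr M (PiM UNIV (\<lambda>_. borel)) (\<lambda>\<omega> n. X j n \<omega>)"
    using X_stat[OF j] unfolding stationary_proc_def by blast
  have m1: "(\<lambda>\<omega> n. X j (n + m) \<omega>) \<in> M \<rightarrow>\<^sub>M PiM UNIV (\<lambda>_. borel)"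
    by (rule measurable_abs_UNIV) (rule X_meas[OF j])
  have m2: "(\<lambda>\<omega> n. X j n \<omega>) \<in> M \<rightarrow>\<^sub>M PiM UNIV (\<lambda>_. borel)"
    by (rule measurable_abs_UNIV) (rule X_meas[OF j])
  have p: "(\<lambda>f. f 0) \<in> borel_measurable (PiM UNIV (\<lambda>_. borel :: real measure))" by measurable
  have "(\<integral>\<omega>. X j m \<omega> \<partial>M) = integral\<^sup>L (distr M (PiM UNIV (\<lambda>_. borel)) (\<lambda>\<omega> n. X j (n + m) \<omega>)) (\<lambda>f. f 0)"
    using integral_distr[OF m1 p] by simp
  also have "\<dots> = integral\<^sup>L (distr M (PiM UNIV (\<lambda>_. borel)) (\<lambda>\<omega> n. X j n \<omega>)) (\<lambda>f. f 0)"
    by (simp add: st)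
  also have "\<dots> = (\<integral>\<omega>. X j 0 \<omega> \<partial>M)" using integral_distr[OF m2 p] by simp
  finally show ?thesis .
qed

lemma Y_int: "j \<le> L \<Longrightarrow> (\<integral>\<omega>. Y j m \<omega> \<partial>M) = (\<integral>\<omega>. X j 0 \<omega> \<partial>M)"
proof -
  assume j: "j \<le> L"
  have "(\<integral>\<omega>. Y j m \<omega> \<partial>M) = (\<integral>\<omega>. X j m \<omega> \<partial>M)"
    by (rule integral_cong_AE) (use Y_meas[OF j] X_meas[OF j] Y_AE j in auto)
  then show ?thesis using X_int_stat[OF j] by simp
qed

lemma int_abs_le: "f \<in> borel_measurable M \<Longrightarrow> (\<And>x. x \<in> space M \<Longrightarrow> \<bar>f x\<bar> \<le> (B::real)) \<Longrightarrow> \<bar>\<integral>x. f x \<partial>M\<bar> \<le> B"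
proof -
  assume fM: "f \<in> borel_measurable M" and b: "\<And>x. x \<in> space M \<Longrightarrow> \<bar>f x\<bar> \<le> B"
  have i: "integrable M f" by (rule bdd_integrable[OF finite_measure_axioms fM b])
  have "\<bar>\<integral>x. f x \<partial>M\<bar> \<le> (\<integral>x. \<bar>f x\<bar> \<partial>M)" by (rule integral_abs_bound)
  also have "\<dots> \<le> B" by (rule integral_le_const) (use i b in auto)
  finally show ?thesis .
qed

lemma YW_int: "j \<le> L \<Longrightarrow> integrable M (\<lambda>\<omega>. \<bar>Y j m \<omega> - W j' m' h \<omega>\<bar>)"
proof (rule bdd_integrable[OF finite_measure_axioms, where B="2*D"])
  assume "j \<le> L"
  then show "(\<lambda>\<omega>. \<bar>Y j m \<omega> - W j' m' h \<omega>\<bar>) \<in> borel_measurable M"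
    using Y_meas W_meas by measurable
  show "\<bar>\<bar>Y j m x - W j' m' h x\<bar>\<bar> \<le> 2 * D" for x
    using Y_abs[of j m x] W_abs[of j' m' h x] by linarith
qed

lemma splitB:
  fixes jj pos :: "'b \<Rightarrow> nat" and I1 I2 :: "'b set"
  assumes fin: "finite I1" "finite I2" and dis: "I1 \<inter> I2 = {}"
    and jL: "\<And>i. i \<in> I1 \<union> I2 \<Longrightarrow> jj i \<le> L"
    and p1: "\<And>i. i \<in> I1 \<Longrightarrow> pos i \<le> a" and p2: "\<And>i. i \<in> I2 \<Longrightarrow> a + g \<le> pos i"
    and cN: "card (I1 \<union> I2) \<le> N"
  shows "\<bar>(\<integral>\<omega>. (\<Prod>i\<in>I1\<union>I2. Y (jj i) (pos i) \<omega>) \<partial>M)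
          - (\<integral>\<omega>. (\<Prod>i\<in>I1. Y (jj i) (pos i) \<omega>) \<partial>M) * (\<integral>\<omega>. (\<Prod>i\<in>I2. Y (jj i) (pos i) \<omega>) \<partial>M)\<bar>
         \<le> (2 * real N + 4) * D ^ N * exp \<kappa> / \<kappa> * exp (- \<kappa> / 3) ^ g"
proof -
  define h where "h = g div 3"
  define \<beta> where "\<beta> = exp (- \<kappa> * real h) / \<kappa>"
  define Z where "Z J \<omega> = (\<Prod>i\<in>J. Y (jj i) (pos i) \<omega>)" for J \<omega>
  define V where "V J \<omega> = (\<Prod>i\<in>J. W (jj i) (pos i) h \<omega>)" for J \<omega>
  have finI: "finite (I1 \<union> I2)" using fin by auto
  have ZM: "J \<subseteq> I1 \<union> I2 \<Longrightarrow> Z J \<in> borel_measurable M" for J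
    unfolding Z_def[abs_def] by (rule borel_measurable_prod) (use Y_meas jL in auto)
  have VM: "V J \<in> borel_measurable M" for J
    unfolding V_def[abs_def] by (rule borel_measurable_prod) (use W_meas in auto)
  have Zb: "\<bar>Z J \<omega>\<bar> \<le> D ^ card J" for J \<omega>
    unfolding Z_def by (rule prod_abs_le) (rule Y_abs)
  have Vb: "\<bar>V J \<omega>\<bar> \<le> D ^ card J" for J \<omega>
    unfolding V_def by (rule prod_abs_le) (rule W_abs)
  have Zi: "J \<subseteq> I1 \<union> I2 \<Longrightarrow> integrable M (Z J)" for J
    by (rule bdd_integrable[OF finite_measure_axioms ZM Zb])
  have Vi: "integrable M (V J)" for J
    by (rule bdd_integrable[OF finite_measure_axioms VM Vb])
  have YWb: "j \<le> L \<Longrightarrow> (\<integral>\<omega>. \<bar>Y j m \<omega> - W j m h \<omega>\<bar> \<partial>M) \<le> \<beta>" for j m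
    unfolding \<beta>_def by (rule YW_bound)
  have ZV: "\<bar>(\<integral>\<omega>. Z J \<omega> \<partial>M) - (\<integral>\<omega>. V J \<omega> \<partial>M)\<bar> \<le> D ^ card J * (card J * \<beta>)"
    if J: "J \<subseteq> I1 \<union> I2" for J
  proof -
    have fJ: "finite J" using J finI finite_subset by blast
    have "\<bar>(\<integral>\<omega>. Z J \<omega> \<partial>M) - (\<integral>\<omega>. V J \<omega> \<partial>M)\<bar> = \<bar>\<integral>\<omega>. Z J \<omega> - V J \<omega> \<partial>M\<bar>"
      using Zi[OF J] Vi by simp
    also have "\<dots> \<le> (\<integral>\<omega>. \<bar>Z J \<omega> - V J \<omega>\<bar> \<partial>M)" by (rule integral_abs_bound)
    also have "\<dots> \<le> (\<integral>\<omega>. D ^ card J * (\<Sum>i\<in>J. \<bar>Y (jj i) (pos i) \<omega> - W (jj i) (pos i) h \<omega>\<bar>) \<partial>M)"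
    proof (rule integral_mono)
      show "integrable M (\<lambda>\<omega>. \<bar>Z J \<omega> - V J \<omega>\<bar>)" using Zi[OF J] Vi by auto
      show "integrable M (\<lambda>\<omega>. D ^ card J * (\<Sum>i\<in>J. \<bar>Y (jj i) (pos i) \<omega> - W (jj i) (pos i) h \<omega>\<bar>))"
        using YW_int J jL by (intro integrable_mult_right Bochner_Integration.integrable_sum) blast
      show "\<bar>Z J \<omega> - V J \<omega>\<bar> \<le> D ^ card J * (\<Sum>i\<in>J. \<bar>Y (jj i) (pos i) \<omega> - W (jj i) (pos i) h \<omega>\<bar>)" for \<omega>
        unfolding Z_def V_def by (rule prod_diff_le[OF fJ D1 Y_abs W_abs])
    qed
    also have "\<dots> = D ^ card J * (\<Sum>i\<in>J. (\<integral>\<omega>. \<bar>Y (jj i) (pos i) \<omega> - W (jj i) (pos i) h \<omega>\<bar> \<partial>M))"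
    proof -
      have "(\<integral>\<omega>. (\<Sum>i\<in>J. \<bar>Y (jj i) (pos i) \<omega> - W (jj i) (pos i) h \<omega>\<bar>) \<partial>M)
          = (\<Sum>i\<in>J. (\<integral>\<omega>. \<bar>Y (jj i) (pos i) \<omega> - W (jj i) (pos i) h \<omega>\<bar> \<partial>M))"
        by (rule Bochner_Integration.integral_sum) (use YW_int J jL in blast)
      then show ?thesis by simp
    qed
    also have "\<dots> \<le> D ^ card J * (\<Sum>i\<in>J. \<beta>)"
      by (rule mult_left_mono[OF sum_mono]) (use YWb J jL D0 in auto)
    finally show ?thesis by simp
  qed
  have Zs: "Z (I1 \<union> I2) \<omega> = Z I1 \<omega> * Z I2 \<omega>" for \<omega>
    unfolding Z_def using fin dis by (simp add: prod.union_disjoint)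
  have Vs: "V (I1 \<union> I2) \<omega> = V I1 \<omega> * V I2 \<omega>" for \<omega>
    unfolding V_def using fin dis by (simp add: prod.union_disjoint)
  have h3: "3 * h \<le> g" "g \<le> 3 * h + 2" unfolding h_def by auto
  have V1F: "V I1 \<in> borel_measurable (F (-\<infinity>) (ereal (real (a + h))))"
    unfolding V_def[abs_def]
  proof (rule borel_measurable_prod)
    fix i assume i: "i \<in> I1"
    show "W (jj i) (pos i) h \<in> borel_measurable (F (-\<infinity>) (ereal (real (a + h))))"
      by (rule F_meas_mono[OF W_measF]) (use p1[OF i] in auto)
  qed
  have V2F: "V I2 \<in> borel_measurable (F (ereal (real ((a + h) + (g - 2 * h)))) \<infinity>)"
    unfolding V_def[abs_def]
  proof (rule borel_measurable_prod)
    fix i assume i: "i \<in> I2"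
    show "W (jj i) (pos i) h \<in> borel_measurable (F (ereal (real ((a + h) + (g - 2 * h)))) \<infinity>)"
      by (rule F_meas_mono[OF W_measF]) (use p2[OF i] h3 ext_int_nat[of "(a + h) + (g - 2 * h)"] in auto)
  qed
  have cov: "\<bar>(\<integral>\<omega>. V I1 \<omega> * V I2 \<omega> \<partial>M) - (\<integral>\<omega>. V I1 \<omega> \<partial>M) * (\<integral>\<omega>. V I2 \<omega> \<partial>M)\<bar>
      \<le> 4 * D ^ card I1 * D ^ card I2 * alpha_mix M F (g - 2 * h)"
    by (rule cov_alpha[OF prob_space_axioms F_sub F_sub V1F Vb V2F Vb alpha_elem[where k="a+h"]])
       (assumption | rule ext_int_nat ext_int_inf)+
  have "alpha_mix M F (g - 2 * h) \<le> exp (- \<kappa> * real (g - 2 * h)) / \<kappa>" by (rule alpha_bound)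
  also have "\<dots> \<le> \<beta>" unfolding \<beta>_def
    by (rule divide_right_mono) (use h3 kappa in auto)
  finally have al: "alpha_mix M F (g - 2 * h) \<le> \<beta>" .
  have b0: "0 \<le> \<beta>" unfolding \<beta>_def using kappa by simp
  have cI: "card (I1 \<union> I2) = card I1 + card I2" using fin dis by (simp add: card_Un_disjoint)
  have DN: "D ^ card (I1 \<union> I2) \<le> D ^ N" using D1 cN by (simp add: power_increasing)
  define z1 where "z1 = (\<integral>\<omega>. Z I1 \<omega> \<partial>M)"
  define z2 where "z2 = (\<integral>\<omega>. Z I2 \<omega> \<partial>M)"
  define v1 where "v1 = (\<integral>\<omega>. V I1 \<omega> \<partial>M)"
  define v2 where "v2 = (\<integral>\<omega>. V I2 \<omega> \<partial>M)"
  define z12 where "z12 = (\<integral>\<omega>. Z (I1 \<union> I2) \<omega> \<partial>M)"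
  define v12 where "v12 = (\<integral>\<omega>. V (I1 \<union> I2) \<omega> \<partial>M)"
  have t1: "\<bar>z12 - v12\<bar> \<le> D ^ N * (N * \<beta>)"
  proof -
    have "\<bar>z12 - v12\<bar> \<le> D ^ card (I1 \<union> I2) * (card (I1 \<union> I2) * \<beta>)"
      unfolding z12_def v12_def by (rule ZV) simp
    also have "\<dots> \<le> D ^ N * (N * \<beta>)"
      by (rule mult_mono[OF DN]) (use cN b0 D0 in \<open>auto intro: mult_right_mono\<close>)
    finally show ?thesis .
  qed
  have t2: "\<bar>v12 - v1 * v2\<bar> \<le> 4 * D ^ N * \<beta>"
  proof -
    have "\<bar>v12 - v1 * v2\<bar> \<le> 4 * D ^ card I1 * D ^ card I2 * alpha_mix M F (g - 2 * h)"
      using cov unfolding v12_def v1_def v2_def Vs by simp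
    also have "\<dots> = 4 * D ^ card (I1 \<union> I2) * alpha_mix M F (g - 2 * h)"
      by (simp add: cI power_add)
    also have "\<dots> \<le> 4 * D ^ N * \<beta>"
      by (rule mult_mono) (use DN al alpha_nonneg D0 in auto)
    finally show ?thesis .
  qed
  have t3: "\<bar>v1 * v2 - z1 * z2\<bar> \<le> D ^ N * (N * \<beta>)"
  proof -
    have av1: "\<bar>v1\<bar> \<le> D ^ card I1" unfolding v1_def by (rule int_abs_le[OF VM Vb])
    have az2: "\<bar>z2\<bar> \<le> D ^ card I2" unfolding z2_def by (rule int_abs_le[OF ZM Zb]) simp
    have d1: "\<bar>z1 - v1\<bar> \<le> D ^ card I1 * (card I1 * \<beta>)" unfolding z1_def v1_def by (rule ZV) simp
    have d2: "\<bar>z2 - v2\<bar> \<le> D ^ card I2 * (card I2 * \<beta>)" unfolding z2_def v2_def by (rule ZV) simp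
    have "v1 * v2 - z1 * z2 = v1 * (v2 - z2) + z2 * (v1 - z1)" by (simp add: algebra_simps)
    then have "\<bar>v1 * v2 - z1 * z2\<bar> \<le> \<bar>v1\<bar> * \<bar>z2 - v2\<bar> + \<bar>z2\<bar> * \<bar>z1 - v1\<bar>"
      by (simp add: abs_mult abs_minus_commute) (metis abs_mult abs_triangle_ineq)
    also have "\<dots> \<le> D ^ card I1 * (D ^ card I2 * (card I2 * \<beta>)) + D ^ card I2 * (D ^ card I1 * (card I1 * \<beta>))"
      by (intro add_mono mult_mono av1 az2 d1 d2) (use D0 b0 in auto)
    also have "\<dots> = D ^ card (I1 \<union> I2) * (card (I1 \<union> I2) * \<beta>)"
      by (simp add: cI power_add algebra_simps)
    also have "\<dots> \<le> D ^ N * (N * \<beta>)"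
      by (rule mult_mono[OF DN]) (use cN b0 D0 in \<open>auto intro: mult_right_mono\<close>)
    finally show ?thesis .
  qed
  have "\<bar>z12 - z1 * z2\<bar> \<le> (2 * real N + 4) * D ^ N * \<beta>"
    using t1 t2 t3 by (simp add: algebra_simps)
  also have "\<beta> \<le> exp \<kappa> / \<kappa> * exp (- \<kappa> / 3) ^ g"
  proof -
    have "exp (- \<kappa> / 3) ^ g = exp (real g * (- \<kappa> / 3))" using exp_of_nat_mult[of g "- \<kappa> / 3", symmetric] by simp
    then have "exp \<kappa> * exp (- \<kappa> / 3) ^ g = exp (\<kappa> + real g * (- \<kappa> / 3))" by (simp add: exp_add[symmetric])
    moreover have "- \<kappa> * real h \<le> \<kappa> + real g * (- \<kappa> / 3)"
    proof -
      have "real g \<le> 3 * real h + 2" using h3 by linarith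
      then have "\<kappa> * real g \<le> \<kappa> * (3 * real h + 2)" using kappa by (intro mult_left_mono) auto
      then show ?thesis using kappa by (simp add: algebra_simps)
    qed
    ultimately show ?thesis unfolding \<beta>_def using kappa by (simp add: divide_right_mono)
  qed
  then have "(2 * real N + 4) * D ^ N * \<beta> \<le> (2 * real N + 4) * D ^ N * (exp \<kappa> / \<kappa> * exp (- \<kappa> / 3) ^ g)"
    by (rule mult_left_mono) (use D0 in auto)
  finally show ?thesis unfolding z12_def z1_def z2_def Z_def by (simp add: mult.assoc)
qed

definition KB :: "nat \<Rightarrow> real" where "KB N = (2 * real N + 4) * D ^ N * exp \<kappa> / \<kappa>"

lemma KB_nonneg: "0 \<le> KB N" unfolding KB_def using D0 kappa by simp

lemma prodC:
  fixes jj pos :: "'b \<Rightarrow> nat" and I :: "'b set"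
  shows "finite I \<Longrightarrow> card I = m \<Longrightarrow> m \<le> N \<Longrightarrow> (\<And>i. i \<in> I \<Longrightarrow> jj i \<le> L) \<Longrightarrow>
    \<bar>(\<integral>\<omega>. (\<Prod>i\<in>I. Y (jj i) (pos i) \<omega>) \<partial>M) - (\<Prod>i\<in>I. (\<integral>\<omega>. Y (jj i) (pos i) \<omega> \<partial>M))\<bar>
      \<le> KB N * m * D ^ m * PSum (exp (- \<kappa> / 3)) pos I"
proof (induction m arbitrary: I)
  case 0
  then show ?case by (simp add: prob_space)
next
  case (Suc m)
  let ?\<rho> = "exp (- \<kappa> / 3)"
  have r0: "0 \<le> ?\<rho>" by simp
  have Ine: "I \<noteq> {}" using Suc by auto
  have "Max (pos ` I) \<in> pos ` I" using Suc.prems(1) Ine by (intro Max_in) auto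
  then obtain i0 where i0: "i0 \<in> I" "pos i0 = Max (pos ` I)" by (metis imageE)
  define I1 where "I1 = I - {i0}"
  have fI1: "finite I1" using Suc by (simp add: I1_def)
  have cI1: "card I1 = m" using Suc i0 by (simp add: I1_def)
  have II: "I = I1 \<union> {i0}" using i0 by (auto simp: I1_def)
  have pmax: "pos i \<le> pos i0" if "i \<in> I" for i using i0 Suc.prems(1) that by simp
  have PS0: "0 \<le> PSum ?\<rho> pos I" by (rule PSum_nonneg[OF r0])
  have Yi0: "\<bar>\<integral>\<omega>. Y (jj i0) (pos i0) \<omega> \<partial>M\<bar> \<le> D"
    by (rule int_abs_le[OF Y_meas Y_abs]) (use Suc.prems(4) i0 in auto)
  show ?case
  proof (cases "I1 = {}")
    case True
    then have "I = {i0}" using II by auto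
    then show ?thesis using PS0 KB_nonneg D0 by simp
  next
    case False
    have "Max (pos ` I1) \<in> pos ` I1" using fI1 False by (intro Max_in) auto
    then obtain i1 where i1: "i1 \<in> I1" "pos i1 = Max (pos ` I1)" by (metis imageE)
    define a where "a = pos i1"
    define g where "g = pos i0 - a"
    have i1I: "i1 \<in> I" "i1 \<noteq> i0" using i1 by (auto simp: I1_def)
    have ag: "a + g = pos i0" unfolding g_def a_def using pmax[OF i1I(1)] by simp
    have nd: "nd (pos i0) (pos i1) = g" unfolding nd_def g_def a_def using pmax[OF i1I(1)] by simp
    have sp: "\<bar>(\<integral>\<omega>. (\<Prod>i\<in>I1\<union>{i0}. Y (jj i) (pos i) \<omega>) \<partial>M)
          - (\<integral>\<omega>. (\<Prod>i\<in>I1. Y (jj i) (pos i) \<omega>) \<partial>M) * (\<integral>\<omega>. (\<Prod>i\<in>{i0}. Y (jj i) (pos i) \<omega>) \<partial>M)\<bar>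
         \<le> (2 * real N + 4) * D ^ N * exp \<kappa> / \<kappa> * exp (- \<kappa> / 3) ^ g"
    proof (rule splitB)
      show "finite I1" "finite {i0}" by (auto simp: fI1)
      show "I1 \<inter> {i0} = {}" by (auto simp: I1_def)
      show "jj i \<le> L" if "i \<in> I1 \<union> {i0}" for i using that Suc.prems(4) II by auto
      show "pos i \<le> a" if "i \<in> I1" for i using that fI1 i1 unfolding a_def by simp
      show "a + g \<le> pos i" if "i \<in> {i0}" for i using that ag by simp
      show "card (I1 \<union> {i0}) \<le> N" using II Suc by simp
    qed
    have IH: "\<bar>(\<integral>\<omega>. (\<Prod>i\<in>I1. Y (jj i) (pos i) \<omega>) \<partial>M) - (\<Prod>i\<in>I1. (\<integral>\<omega>. Y (jj i) (pos i) \<omega> \<partial>M))\<bar>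
      \<le> KB N * m * D ^ m * PSum ?\<rho> pos I1"
      by (rule Suc.IH[OF fI1 cI1]) (use Suc.prems II in auto)
    define e where "e = (\<integral>\<omega>. Y (jj i0) (pos i0) \<omega> \<partial>M)"
    define p1 where "p1 = (\<integral>\<omega>. (\<Prod>i\<in>I1. Y (jj i) (pos i) \<omega>) \<partial>M)"
    define q1 where "q1 = (\<Prod>i\<in>I1. (\<integral>\<omega>. Y (jj i) (pos i) \<omega> \<partial>M))"
    have eqI: "(\<Prod>i\<in>I. (\<integral>\<omega>. Y (jj i) (pos i) \<omega> \<partial>M)) = q1 * e"
      using prod.remove[OF Suc.prems(1) i0(1), of "\<lambda>i. (\<integral>\<omega>. Y (jj i) (pos i) \<omega> \<partial>M)"]
      unfolding q1_def e_def I1_def by (simp add: mult.commute)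
    have "\<bar>(\<integral>\<omega>. (\<Prod>i\<in>I. Y (jj i) (pos i) \<omega>) \<partial>M) - q1 * e\<bar>
       \<le> \<bar>(\<integral>\<omega>. (\<Prod>i\<in>I. Y (jj i) (pos i) \<omega>) \<partial>M) - p1 * e\<bar> + \<bar>e\<bar> * \<bar>p1 - q1\<bar>"
      by (simp add: abs_mult[symmetric] algebra_simps)
    also have "\<dots> \<le> KB N * ?\<rho> ^ g + D * (KB N * m * D ^ m * PSum ?\<rho> pos I1)"
    proof (rule add_mono)
      show "\<bar>(\<integral>\<omega>. (\<Prod>i\<in>I. Y (jj i) (pos i) \<omega>) \<partial>M) - p1 * e\<bar> \<le> KB N * ?\<rho> ^ g"
        using sp unfolding KB_def p1_def e_def II[symmetric] by simp
      show "\<bar>e\<bar> * \<bar>p1 - q1\<bar> \<le> D * (KB N * m * D ^ m * PSum ?\<rho> pos I1)"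
        by (rule mult_mono) (use Yi0 IH D0 in \<open>auto simp: e_def p1_def q1_def\<close>)
    qed
    also have "\<dots> \<le> KB N * real (Suc m) * D ^ Suc m * PSum ?\<rho> pos I"
    proof -
      have PSr: "PSum ?\<rho> pos I1 + ?\<rho> ^ g \<le> PSum ?\<rho> pos I"
        using PSum_remove[OF Suc.prems(1) i0(1) i1I(1) i1I(2) r0, of pos] nd by (simp add: I1_def)
      have Dm: "1 \<le> D ^ Suc m" using D1 by (rule one_le_power)
      have "1 * 1 \<le> real (Suc m) * D ^ Suc m" by (rule mult_mono) (use Dm in auto)
      then have c1: "1 \<le> real (Suc m) * D ^ Suc m" by simp
      have c2: "real m * D ^ Suc m \<le> real (Suc m) * D ^ Suc m" using D0 by (intro mult_right_mono) auto
      have p0: "0 \<le> PSum ?\<rho> pos I1" by (rule PSum_nonneg[OF r0])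
      have g0: "0 \<le> ?\<rho> ^ g" by simp
      have "KB N * ?\<rho> ^ g + D * (KB N * m * D ^ m * PSum ?\<rho> pos I1)
          = KB N * (?\<rho> ^ g + (real m * D ^ Suc m) * PSum ?\<rho> pos I1)" by (simp add: algebra_simps)
      also have "\<dots> \<le> KB N * ((real (Suc m) * D ^ Suc m) * ?\<rho> ^ g + (real (Suc m) * D ^ Suc m) * PSum ?\<rho> pos I1)"
        by (intro mult_left_mono add_mono mult_right_mono KB_nonneg p0 g0 c2)
           (use c1 g0 in \<open>simp add: mult_le_cancel_right1\<close>)
      also have "\<dots> = KB N * real (Suc m) * D ^ Suc m * (PSum ?\<rho> pos I1 + ?\<rho> ^ g)"
        by (simp add: algebra_simps)
      also have "\<dots> \<le> KB N * real (Suc m) * D ^ Suc m * PSum ?\<rho> pos I"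
        by (rule mult_left_mono[OF PSr]) (use KB_nonneg D0 in simp)
      finally show ?thesis .
    qed
    finally show ?thesis using eqI by simp
  qed
qed

definition Pk :: "(nat \<Rightarrow> nat \<Rightarrow> nat) \<Rightarrow> nat \<Rightarrow> 'a \<Rightarrow> real" where
  "Pk q k \<omega> = (\<Prod>j\<in>{0..L}. Y j (q j k) \<omega>)"
definition AA :: real where "AA = (\<Prod>j\<in>{0..L}. (\<integral>\<omega>. X j 0 \<omega> \<partial>M))"
definition NN :: nat where "NN = 2 * L + 2"
definition KC :: real where "KC = KB NN * NN * D ^ NN"

lemma KC_nonneg: "0 \<le> KC" unfolding KC_def using KB_nonneg D0 by simp

lemma Pk_meas: "Pk q k \<in> borel_measurable M"
  unfolding Pk_def[abs_def] by (rule borel_measurable_prod) (use Y_meas in auto)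
lemma Pk_abs: "\<bar>Pk q k \<omega>\<bar> \<le> D ^ (L + 1)"
  unfolding Pk_def using prod_abs_le[of "{0..L}" "\<lambda>j. Y j (q j k) \<omega>" D] Y_abs by simp
lemma Pk_int: "integrable M (Pk q k)"
  by (rule bdd_integrable[OF finite_measure_axioms Pk_meas Pk_abs])
lemma AA_abs: "\<bar>AA\<bar> \<le> D ^ (L + 1)"
proof -
  have "\<bar>AA\<bar> \<le> D ^ card {0..L}" unfolding AA_def
    by (rule prod_abs_le) (use Y_int int_abs_le[OF Y_meas Y_abs] in \<open>metis atLeastAtMost_iff\<close>)
  then show ?thesis by simp
qed
lemma prod_int_Y: "(\<Prod>j\<in>{0..L}. (\<integral>\<omega>. Y j (q j k) \<omega> \<partial>M)) = AA"
  unfolding AA_def by (rule prod.cong) (auto simp: Y_int)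

lemma Pk_dev: "\<bar>(\<integral>\<omega>. Pk q k \<omega> \<partial>M) - AA\<bar> \<le> KC * PSum (exp (- \<kappa> / 3)) (\<lambda>j. q j k) {0..L}"
proof -
  have "\<bar>(\<integral>\<omega>. (\<Prod>j\<in>{0..L}. Y (id j) (q j k) \<omega>) \<partial>M) - (\<Prod>j\<in>{0..L}. (\<integral>\<omega>. Y (id j) (q j k) \<omega> \<partial>M))\<bar>
      \<le> KB NN * real (L + 1) * D ^ (L + 1) * PSum (exp (- \<kappa> / 3)) (\<lambda>j. q j k) {0..L}"
    by (rule prodC) (auto simp: NN_def)
  also have "\<dots> \<le> KC * PSum (exp (- \<kappa> / 3)) (\<lambda>j. q j k) {0..L}"
    unfolding KC_def
  proof (intro mult_right_mono PSum_nonneg)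
    have "real (L + 1) \<le> real NN" by (simp add: NN_def)
    moreover have "D ^ (L + 1) \<le> D ^ NN" by (rule power_increasing) (use D1 in \<open>auto simp: NN_def\<close>)
    ultimately
    show "KB NN * real (L + 1) * D ^ (L + 1) \<le> KB NN * real NN * D ^ NN"
      using KB_nonneg D0 by (intro mult_mono) auto
  qed auto
  finally show ?thesis using prod_int_Y[of q k] unfolding Pk_def by simp
qed

lemma Pk2_dev: "\<bar>(\<integral>\<omega>. Pk q k \<omega> * Pk q k' \<omega> \<partial>M) - AA * AA\<bar>
   \<le> KC * PSum (exp (- \<kappa> / 3)) (pos2 q k k') ({0..L} \<times> UNIV)"
proof -
  let ?I = "{0..L} \<times> (UNIV :: bool set)"
  have cI: "card ?I = NN" by (simp add: card_cartesian_product NN_def)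
  have fI: "finite ?I" by simp
  have pr: "(\<Prod>i\<in>?I. f i) = (\<Prod>j\<in>{0..L}. f (j, False)) * (\<Prod>j\<in>{0..L}. f (j, True))" for f :: "nat \<times> bool \<Rightarrow> real"
  proof -
    have "(\<Prod>i\<in>?I. f i) = (\<Prod>j\<in>{0..L}. \<Prod>b\<in>UNIV. f (j, b))"
      by (simp add: prod.cartesian_product)
    also have "\<dots> = (\<Prod>j\<in>{0..L}. f (j, False) * f (j, True))"
      by (simp add: UNIV_bool)
    finally show ?thesis by (simp add: prod.distrib)
  qed
  have "\<bar>(\<integral>\<omega>. (\<Prod>i\<in>?I. Y (fst i) (pos2 q k k' i) \<omega>) \<partial>M) - (\<Prod>i\<in>?I. (\<integral>\<omega>. Y (fst i) (pos2 q k k' i) \<omega> \<partial>M))\<bar>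
      \<le> KB NN * real NN * D ^ NN * PSum (exp (- \<kappa> / 3)) (pos2 q k k') ?I"
    by (rule prodC[OF fI cI]) auto
  moreover have "(\<Prod>i\<in>?I. Y (fst i) (pos2 q k k' i) \<omega>) = Pk q k \<omega> * Pk q k' \<omega>" for \<omega>
    unfolding pr by (simp add: Pk_def pos2_def)
  moreover have "(\<Prod>i\<in>?I. (\<integral>\<omega>. Y (fst i) (pos2 q k k' i) \<omega> \<partial>M)) = AA * AA"
    unfolding pr using prod_int_Y[of q k] prod_int_Y[of q k'] by (simp add: pos2_def)
  ultimately show ?thesis by (simp add: KC_def)
qed

lemma PkPk_int: "integrable M (\<lambda>\<omega>. Pk q k \<omega> * Pk q k' \<omega>)"
proof (rule bdd_integrable[OF finite_measure_axioms, where B="D ^ (L+1) * D ^ (L+1)"])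
  show "(\<lambda>\<omega>. Pk q k \<omega> * Pk q k' \<omega>) \<in> borel_measurable M" using Pk_meas by measurable
  fix x
  have "0 \<le> D ^ (L + 1)" using D0 by simp
  then show "\<bar>Pk q k x * Pk q k' x\<bar> \<le> D ^ (L+1) * D ^ (L+1)"
    unfolding abs_mult by (intro mult_mono Pk_abs) auto
qed

lemma RR:
  "\<bar>\<integral>\<omega>. (Pk q k \<omega> - AA) * (Pk q k' \<omega> - AA) \<partial>M\<bar>
    \<le> KC * (PSum (exp (- \<kappa> / 3)) (pos2 q k k') ({0..L} \<times> UNIV)
        + D ^ (L + 1) * (PSum (exp (- \<kappa> / 3)) (\<lambda>j. q j k) {0..L} + PSum (exp (- \<kappa> / 3)) (\<lambda>j. q j k') {0..L}))"
proof -
  let ?P = "Pk q k" and ?P' = "Pk q k'"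
  have i1: "integrable M (\<lambda>\<omega>. ?P \<omega> * ?P' \<omega> - AA * ?P \<omega>)" using PkPk_int Pk_int by auto
  have i2: "integrable M (\<lambda>\<omega>. ?P \<omega> * ?P' \<omega> - AA * ?P \<omega> - AA * ?P' \<omega>)" using i1 Pk_int by auto
  have "(\<integral>\<omega>. (?P \<omega> - AA) * (?P' \<omega> - AA) \<partial>M) = (\<integral>\<omega>. (?P \<omega> * ?P' \<omega> - AA * ?P \<omega> - AA * ?P' \<omega>) + AA * AA \<partial>M)"
    by (rule Bochner_Integration.integral_cong) (auto simp: algebra_simps)
  also have "\<dots> = (\<integral>\<omega>. ?P \<omega> * ?P' \<omega> \<partial>M) - AA * (\<integral>\<omega>. ?P \<omega> \<partial>M) - AA * (\<integral>\<omega>. ?P' \<omega> \<partial>M) + AA * AA"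
    using i1 i2 PkPk_int Pk_int by (simp add: prob_space)
  also have "\<dots> = ((\<integral>\<omega>. ?P \<omega> * ?P' \<omega> \<partial>M) - AA * AA) - AA * ((\<integral>\<omega>. ?P \<omega> \<partial>M) - AA) - AA * ((\<integral>\<omega>. ?P' \<omega> \<partial>M) - AA)"
    by (simp add: algebra_simps)
  finally have e: "(\<integral>\<omega>. (?P \<omega> - AA) * (?P' \<omega> - AA) \<partial>M) = \<dots>" .
  have a1: "\<bar>AA * ((\<integral>\<omega>. ?P \<omega> \<partial>M) - AA)\<bar> \<le> D ^ (L + 1) * (KC * PSum (exp (- \<kappa> / 3)) (\<lambda>j. q j k) {0..L})"
    unfolding abs_mult by (rule mult_mono[OF AA_abs Pk_dev]) (use D0 in auto)
  have a2: "\<bar>AA * ((\<integral>\<omega>. ?P' \<omega> \<partial>M) - AA)\<bar> \<le> D ^ (L + 1) * (KC * PSum (exp (- \<kappa> / 3)) (\<lambda>j. q j k') {0..L})"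
    unfolding abs_mult by (rule mult_mono[OF AA_abs Pk_dev]) (use D0 in auto)
  note a0 = Pk2_dev[of q k k']
  show ?thesis unfolding e using a0 a1 a2 by (simp add: algebra_simps)
qed

lemma total_bound:
  fixes q :: "nat \<Rightarrow> nat \<Rightarrow> nat" and B1 B2 :: real
  assumes B1: "\<And>j x A. j \<le> L \<Longrightarrow> finite A \<Longrightarrow> (\<Sum>k\<in>A. exp (- \<kappa> / 3) ^ nd x (q j k)) \<le> B1"
    and B2: "\<And>j j' A. j \<le> L \<Longrightarrow> j' \<le> L \<Longrightarrow> j \<noteq> j' \<Longrightarrow> finite A \<Longrightarrow>
               (\<Sum>k\<in>A. exp (- \<kappa> / 3) ^ nd (q j k) (q j' k)) \<le> B2"
    and B1nn: "0 \<le> B1" and B2nn: "0 \<le> B2"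
  shows "(\<integral>\<omega>. (\<Sum>k = 0..n. (\<Prod>j = 0..L. X j (q j k) \<omega>) - (\<Prod>j = 0..L. (\<integral>\<omega>'. X j 0 \<omega>' \<partial>M))) ^ 2 \<partial>M)
     \<le> KC * (real NN * real NN * (B1 + B2) + 2 * D ^ (L + 1) * (real (L + 1) * real (L + 1) * B2)) * real (n + 1)"
proof -
  let ?\<rho> = "exp (- \<kappa> / 3)"
  let ?S = "{0..n}"
  let ?R = "\<lambda>k \<omega>. Pk q k \<omega> - AA"
  let ?PS0 = "\<lambda>k. PSum ?\<rho> (\<lambda>j. q j k) {0..L}"
  let ?PS2 = "\<lambda>k k'. PSum ?\<rho> (pos2 q k k') ({0..L} \<times> UNIV)"
  have Rint: "integrable M (\<lambda>\<omega>. ?R k \<omega> * ?R k' \<omega>)" for k k'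
    using PkPk_int Pk_int by (simp add: algebra_simps)
  have "(\<integral>\<omega>. (\<Sum>k = 0..n. (\<Prod>j = 0..L. X j (q j k) \<omega>) - (\<Prod>j = 0..L. (\<integral>\<omega>'. X j 0 \<omega>' \<partial>M))) ^ 2 \<partial>M)
      = (\<integral>\<omega>. (\<Sum>k\<in>?S. ?R k \<omega>) ^ 2 \<partial>M)"
  proof (rule integral_cong_AE)
    show "(\<lambda>\<omega>. (\<Sum>k = 0..n. (\<Prod>j = 0..L. X j (q j k) \<omega>) - (\<Prod>j = 0..L. (\<integral>\<omega>'. X j 0 \<omega>' \<partial>M))) ^ 2) \<in> borel_measurable M"
      using X_meas by measurable
    show "(\<lambda>\<omega>. (\<Sum>k\<in>?S. ?R k \<omega>) ^ 2) \<in> borel_measurable M" using Pk_meas by measurable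
    show "AE \<omega> in M. (\<Sum>k = 0..n. (\<Prod>j = 0..L. X j (q j k) \<omega>) - (\<Prod>j = 0..L. (\<integral>\<omega>'. X j 0 \<omega>' \<partial>M))) ^ 2
               = (\<Sum>k\<in>?S. ?R k \<omega>) ^ 2"
      using Y_AE by eventually_elim (simp add: Pk_def AA_def)
  qed
  also have "\<dots> = (\<integral>\<omega>. (\<Sum>k\<in>?S. \<Sum>k'\<in>?S. ?R k \<omega> * ?R k' \<omega>) \<partial>M)"
    by (simp add: power2_eq_square sum_product)
  also have "\<dots> = (\<Sum>k\<in>?S. \<Sum>k'\<in>?S. (\<integral>\<omega>. ?R k \<omega> * ?R k' \<omega> \<partial>M))"
    using Rint by (simp add: Bochner_Integration.integral_sum Bochner_Integration.integrable_sum)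
  also have "\<dots> \<le> (\<Sum>k\<in>?S. \<Sum>k'\<in>?S. KC * (?PS2 k k' + D ^ (L + 1) * (?PS0 k + ?PS0 k')))"
    by (intro sum_mono order_trans[OF abs_ge_self RR])
  also have "\<dots> = KC * ((\<Sum>k\<in>?S. \<Sum>k'\<in>?S. ?PS2 k k') + D ^ (L + 1) * (2 * (real (n + 1) * (\<Sum>k\<in>?S. ?PS0 k))))"
    by (simp add: sum_distrib_left sum.distrib algebra_simps sum.swap[of "\<lambda>k k'. PSum ?\<rho> (\<lambda>j. q j k) {0..L}"])
  also have "\<dots> \<le> KC * (real NN * real NN * (real (n + 1) * (B1 + B2)) + D ^ (L + 1) * (2 * (real (n + 1) * (real (L + 1) * real (L + 1) * B2))))"
  proof -
    have s2: "(\<Sum>k\<in>?S. \<Sum>k'\<in>?S. ?PS2 k k') \<le> real NN * real NN * (real (n + 1) * (B1 + B2))"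
    proof -
      have cI: "real (card ({0..L} \<times> (UNIV::bool set))) = real NN" by (simp add: card_cartesian_product NN_def)
      have cS: "real (card ?S) = real (n + 1)" by simp
      show ?thesis using sumS2[of ?S L ?\<rho> q B1 B2] B1 B2 B1nn B2nn unfolding cI cS by blast
    qed
    have s0: "(\<Sum>k\<in>?S. ?PS0 k) \<le> real (L + 1) * real (L + 1) * B2"
      by (rule sumS0) (use B2 B2nn in auto)
    show ?thesis using KC_nonneg D0 s0 s2
      by (intro mult_left_mono add_mono s2 mult_left_mono) auto
  qed
  also have "\<dots> = KC * (real NN * real NN * (B1 + B2) + 2 * D ^ (L + 1) * (real (L + 1) * real (L + 1) * B2)) * real (n + 1)"
    by (simp add: algebra_simps)
  finally show ?thesis .
qed

end

theorem lemma5p1: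
  fixes M :: "'a measure"
    and L :: nat
    and X :: "nat \<Rightarrow> nat \<Rightarrow> 'a \<Rightarrow> real"
    and D :: real
    and F :: "ereal \<Rightarrow> ereal \<Rightarrow> 'a measure"
    and \<kappa> :: real
    and q :: "nat \<Rightarrow> nat \<Rightarrow> nat"
    and r p :: nat
    and \<gamma> :: real
    and n0 :: nat
  assumes P: "prob_space M"
    and l: "L \<ge> 1"
    and X_meas: "\<And>j n. j \<le> L \<Longrightarrow> X j n \<in> borel_measurable M"
    and X_stat: "\<And>j. j \<le> L \<Longrightarrow> stationary_proc M (X j)"
    and X_bdd: "\<And>j n. j \<le> L \<Longrightarrow> AE \<omega> in M. \<bar>X j n \<omega>\<bar> \<le> D"
    and F_sub: "\<And>k l. k \<in> ext_int_idx \<Longrightarrow> l \<in> ext_int_idx \<Longrightarrow> subalgebra M (F k l)"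
    and F_mono: "\<And>k l k' l'. k \<in> ext_int_idx \<Longrightarrow> l \<in> ext_int_idx \<Longrightarrow> k' \<in> ext_int_idx \<Longrightarrow>
                   l' \<in> ext_int_idx \<Longrightarrow> k' \<le> k \<Longrightarrow> l \<le> l' \<Longrightarrow> sets (F k l) \<subseteq> sets (F k' l')"
    and kappa: "\<kappa> > 0"
    and mixing: "\<And>n. alpha_mix M F n + Max ((\<lambda>j. beta_mix M F (X j) n) ` {0..L})
                        \<le> exp (- \<kappa> * real n) / \<kappa>"
    and q0: "\<And>n. q 0 n = n"
    and r: "r \<ge> 2"
    and q1: "\<And>n. q 1 n = r * n + p"
    and gamma: "0 < \<gamma>" "\<gamma> < 1"
    and n0: "n0 > 1"
    and q_growth: "\<And>j n. 2 \<le> j \<Longrightarrow> j \<le> L \<Longrightarrow> n \<ge> n0 \<Longrightarrow>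
                     real (q j (n + 1)) \<ge> real (q j n) + real n powr \<gamma>"
    and q_nest: "\<And>j n. 1 \<le> j \<Longrightarrow> j \<le> L - 1 \<Longrightarrow> n \<ge> n0 \<Longrightarrow>
                     real (q (j + 1) (nat \<lfloor>real n powr (1 - \<gamma>)\<rfloor>)) \<ge> real (q j n) * real n powr \<gamma>"
  shows "\<exists>C > 0. \<forall>n::nat. n \<ge> 1 \<longrightarrow>
           (\<integral>\<omega>. (\<Sum>k = 0..n. (\<Prod>j = 0..L. X j (q j k) \<omega>)
                               - (\<Prod>j = 0..L. (\<integral>\<omega>'. X j 0 \<omega>' \<partial>M))) ^ 2 \<partial>M) \<le> C * real n"
proof -
  define D' where "D' = max D 1"
  interpret mixs M L X D' F \<kappa>
  proof (intro mixs.intro[OF P] mixs_axioms.intro)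
    fix j n assume j: "j \<le> L"
    from X_bdd[OF j, of n] show "AE \<omega> in M. \<bar>X j n \<omega>\<bar> \<le> D'"
      unfolding D'_def by eventually_elim auto
  qed (use X_meas X_stat F_sub F_mono kappa mixing in \<open>auto simp: D'_def\<close>)
  let ?\<rho> = "exp (- \<kappa> / 3)"
  have r0: "0 \<le> ?\<rho>" by simp
  have r1: "?\<rho> < 1" using kappa by simp
  obtain K where K: "\<forall>k\<ge>K. \<forall>i i'. i \<le> L \<longrightarrow> i' \<le> L \<longrightarrow> i \<noteq> i' \<longrightarrow> k \<le> nd (q i k) (q i' k)"
    using q_sep[OF q_growth q_nest n0 q0 r q1 gamma] by blast
  define B1 where "B1 = real n0 + 2 / (1 - ?\<rho>)"
  define B2 where "B2 = real K + 1 / (1 - ?\<rho>)"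
  have B1nn: "0 \<le> B1" unfolding B1_def using r1 by simp
  have B2nn: "0 \<le> B2" unfolding B2_def using r1 by simp
  have hB1: "(\<Sum>k\<in>A. ?\<rho> ^ nd x (q j k)) \<le> B1" if "j \<le> L" "finite A" for j x A
    unfolding B1_def by (rule B1_lemma[OF r0 r1 q_inj[OF q_growth n0 q0 r q1 that(1)] that(2)])
  have hB2: "(\<Sum>k\<in>A. ?\<rho> ^ nd (q j k) (q j' k)) \<le> B2" if "j \<le> L" "j' \<le> L" "j \<noteq> j'" "finite A" for j j' A
    unfolding B2_def by (rule B2_lemma[OF r0 r1 _ that(4)]) (use K that in auto)
  define C0 where "C0 = KC * (real NN * real NN * (B1 + B2) + 2 * D' ^ (L + 1) * (real (L + 1) * real (L + 1) * B2))"
  have C0: "0 \<le> C0" unfolding C0_def using KC_nonneg B1nn B2nn D0 by simp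
  show ?thesis
  proof (intro exI[of _ "2 * C0 + 1"] conjI allI impI)
    show "0 < 2 * C0 + 1" using C0 by simp
    fix n :: nat assume n: "1 \<le> n"
    have "(\<integral>\<omega>. (\<Sum>k = 0..n. (\<Prod>j = 0..L. X j (q j k) \<omega>)
                               - (\<Prod>j = 0..L. (\<integral>\<omega>'. X j 0 \<omega>' \<partial>M))) ^ 2 \<partial>M) \<le> C0 * real (n + 1)"
      unfolding C0_def by (rule total_bound[OF hB1 hB2 B1nn B2nn])
    also have "\<dots> \<le> (2 * C0 + 1) * real n"
    proof -
      have "C0 * 1 \<le> C0 * real n" using n C0 by (intro mult_left_mono) auto
      then show ?thesis using n by (simp add: algebra_simps)
    qed
    finally show "(\<integral>\<omega>. (\<Sum>k = 0..n. (\<Prod>j = 0..L. X j (q j k) \<omega>)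
                               - (\<Prod>j = 0..L. (\<integral>\<omega>'. X j 0 \<omega>' \<partial>M))) ^ 2 \<partial>M) \<le> (2 * C0 + 1) * real n" .
  qed
qed

end
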